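(* Let $(X,d_X)$ be a proper, doubling metric space, $p\in X$, and let $\eta:[0,\infty)\to[0,\infty)$ be a homeomorphism. Assume there is a sequence of points $p_n\in X$ with $p_n\to p$ such that $X$ is $\eta$-self-quasisymmetric at $p_n$ for every $n$. Then there exists a weak tangent $T_pX\in WT_p(X)$ such that $X$ is $\eta'$-quasisymmetrically embedded into $T_pX$, where $\eta'(t)=1/\eta^{-1}(1/t)$.
   Context: A homeomorphism $f:X\to Y$ between metric spaces is $\eta$-quasisymmetric if $d_Y(f(x),f(y))/d_Y(f(x),f(z))\le \eta(d_X(x,y)/d_X(x,z))$ for all $x,y,z\in X$ with $x\ne z$; an $\eta$-quasisymmetric embedding is an $\eta$-quasisymmetric homeomorphism onto its image. $X$ is $\eta$-self-quasisymmetric at a point $x$ if there is $r_x>0$ such that for every $0<r<r_x$ there exists a subset $U\subset B(x,r)$ and an $\eta$-quasisymmetric homeomorphism from $U$ onto $X$. Proper: closed balls are compact. Doubling: there is $C\ge1$ such that every subset of diameter $d$ is covered by at most $C$ subsets of diameter at most $d/2$. Pointed Gromov–Hausdorff convergence $(X_n,p_n,d_n)\to(Z,z,d)$ ($Z$ complete): for every $r,\varepsilon>0$ there is $n_0$ such that for all $n>n_0$ there is a map $g:B(p_n,r)\to Z$ with $g(p_n)=z$, $\sup_{x,y}|d_n(x,y)-d(g(x),g(y))|<\varepsilon$, and $B(z,r-\varepsilon)$ contained in the $\varepsilon$-neighborhood of $g(B(p_n,r))$. A weak tangent of $X$ at $p$ is a pointed Gromov–Hausdorff limit $(T_pX,p_\infty,g_p)$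 of $(X,q_n,d_X/\lambda_n)$ with $\lambda_n>0$, $\lambda_n\to0$ and $q_n\to p$; $WT_p(X)$ is the set of these. *)

theory Defs
  imports "HOL-Analysis.Analysis"
begin

text \<open>Metric spaces are given as a carrier set together with a distance function,
  satisfying the locale Metric_space (HOL-Analysis, Abstract_Metric_Spaces).\<close>

definition mdiam :: "('a \<Rightarrow> 'a \<Rightarrow> real) \<Rightarrow> 'a set \<Rightarrow> ereal" where
  "mdiam d A = (SUP xy \<in> A \<times> A. ereal (d (fst xy) (snd xy)))"

definition proper_mspace :: "'a set \<Rightarrow> ('a \<Rightarrow> 'a \<Rightarrow> real) \<Rightarrow> bool" where
  "proper_mspace X d \<longleftrightarrow>
     (\<forall>x r. compactin (Metric_space.mtopology X d) (Metric_space.mcball X d x r))"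

definition doubling_mspace :: "'a set \<Rightarrow> ('a \<Rightarrow> 'a \<Rightarrow> real) \<Rightarrow> bool" where
  "doubling_mspace X d \<longleftrightarrow>
     (\<exists>C::real. C \<ge> 1 \<and> (\<forall>A. A \<subseteq> X \<longrightarrow>
        (\<exists>F. finite F \<and> real (card F) \<le> C \<and> A \<subseteq> \<Union>F \<and>
             (\<forall>B\<in>F. B \<subseteq> X \<and> mdiam d B \<le> mdiam d A / 2))))"

definition qs_homeo ::
  "'a set \<Rightarrow> ('a \<Rightarrow> 'a \<Rightarrow> real) \<Rightarrow> 'b set \<Rightarrow> ('b \<Rightarrow> 'b \<Rightarrow> real)
     \<Rightarrow> (real \<Rightarrow> real) \<Rightarrow> ('a \<Rightarrow> 'b) \<Rightarrow> bool" where
  "qs_homeo X dX Y dY \<eta> f \<longleftrightarrow>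
     homeomorphic_map (Metric_space.mtopology X dX) (Metric_space.mtopology Y dY) f \<and>
     (\<forall>x\<in>X. \<forall>y\<in>X. \<forall>z\<in>X. x \<noteq> z \<longrightarrow>
        dY (f x) (f y) / dY (f x) (f z) \<le> \<eta> (dX x y / dX x z))"

definition qs_embedding ::
  "'a set \<Rightarrow> ('a \<Rightarrow> 'a \<Rightarrow> real) \<Rightarrow> 'b set \<Rightarrow> ('b \<Rightarrow> 'b \<Rightarrow> real)
     \<Rightarrow> (real \<Rightarrow> real) \<Rightarrow> ('a \<Rightarrow> 'b) \<Rightarrow> bool" where
  "qs_embedding X dX Y dY \<eta> f \<longleftrightarrow> f ` X \<subseteq> Y \<and> qs_homeo X dX (f ` X) dY \<eta> f"

definition self_qs_at :: "'a set \<Rightarrow> ('a \<Rightarrow> 'a \<Rightarrow> real) \<Rightarrow> (real \<Rightarrow> real) \<Rightarrow> 'a \<Rightarrow> bool" where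
  "self_qs_at X d \<eta> x \<longleftrightarrow>
     (\<exists>rx>0. \<forall>r. 0 < r \<and> r < rx \<longrightarrow>
        (\<exists>U f. U \<subseteq> Metric_space.mball X d x r \<and> qs_homeo U d X d \<eta> f \<and> f ` U = X))"

definition pGH_converges ::
  "(nat \<Rightarrow> 'a set) \<Rightarrow> (nat \<Rightarrow> 'a) \<Rightarrow> (nat \<Rightarrow> 'a \<Rightarrow> 'a \<Rightarrow> real)
     \<Rightarrow> 'b set \<Rightarrow> 'b \<Rightarrow> ('b \<Rightarrow> 'b \<Rightarrow> real) \<Rightarrow> bool" where
  "pGH_converges Xs ps ds Z z dZ \<longleftrightarrow>
     Metric_space Z dZ \<and> Metric_space.mcomplete Z dZ \<and> z \<in> Z \<and>
     (\<forall>r>0. \<forall>\<epsilon>>0. \<exists>n0. \<forall>n>n0.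
        (\<exists>g. (\<forall>x \<in> Metric_space.mball (Xs n) (ds n) (ps n) r. g x \<in> Z) \<and>
             g (ps n) = z \<and>
             (\<exists>\<delta><\<epsilon>. \<forall>x \<in> Metric_space.mball (Xs n) (ds n) (ps n) r.
                        \<forall>y \<in> Metric_space.mball (Xs n) (ds n) (ps n) r.
                          \<bar>ds n x y - dZ (g x) (g y)\<bar> \<le> \<delta>) \<and>
             Metric_space.mball Z dZ z (r - \<epsilon>) \<subseteq>
               {w \<in> Z. \<exists>x \<in> Metric_space.mball (Xs n) (ds n) (ps n) r. dZ w (g x) < \<epsilon>}))"

definition weak_tangents ::
  "'a set \<Rightarrow> ('a \<Rightarrow> 'a \<Rightarrow> real) \<Rightarrow> 'a \<Rightarrow> ('b set \<times> 'b \<times> ('b \<Rightarrow> 'b \<Rightarrow> real)) set" where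
  "weak_tangents X d p =
     {(T, t, dT). \<exists>lam q. (\<forall>n. lam n > 0) \<and> lam \<longlonglongrightarrow> 0 \<and>
        (\<forall>n. q n \<in> X) \<and> (\<lambda>n. d (q n) p) \<longlonglongrightarrow> 0 \<and>
        pGH_converges (\<lambda>n. X) q (\<lambda>n x y. d x y / lam n) T t dT}"

end

theory Submission
  imports Defs
begin

lemma ultrafilter_exists:
  "\<exists>U::nat filter. U \<noteq> bot \<and> U \<le> sequentially \<and> (\<forall>P. eventually P U \<or> eventually (\<lambda>x. \<not> P x) U)"
proof -
  define \<A> where "\<A> = {M :: nat set set. (\<forall>A. finite (- A) \<longrightarrow> A \<in> M) \<and> {} \<notin> M \<and>
     (\<forall>A\<in>M. \<forall>B\<in>M. A \<inter> B \<in> M) \<and> (\<forall>A\<in>M. \<forall>B. A \<subseteq> B \<longrightarrow> B \<in> M)}"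
  have AI: "M \<in> \<A>" if "\<And>A. finite (- A) \<Longrightarrow> A \<in> M" "{} \<notin> M"
    "\<And>A B. A \<in> M \<Longrightarrow> B \<in> M \<Longrightarrow> A \<inter> B \<in> M" "\<And>A B. A \<in> M \<Longrightarrow> A \<subseteq> B \<Longrightarrow> B \<in> M" for M
    unfolding \<A>_def using that by simp
  have AD1: "\<And>M A. M \<in> \<A> \<Longrightarrow> finite (- A) \<Longrightarrow> A \<in> M" unfolding \<A>_def by simp
  have AD2: "\<And>M. M \<in> \<A> \<Longrightarrow> {} \<notin> M" unfolding \<A>_def by simp
  have AD3: "\<And>M A B. M \<in> \<A> \<Longrightarrow> A \<in> M \<Longrightarrow> B \<in> M \<Longrightarrow> A \<inter> B \<in> M" unfolding \<A>_def by simp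
  have AD4: "\<And>M A B. M \<in> \<A> \<Longrightarrow> A \<in> M \<Longrightarrow> A \<subseteq> B \<Longrightarrow> B \<in> M" unfolding \<A>_def by blast
  define M0 where "M0 = {A :: nat set. finite (- A)}"
  have M0: "M0 \<in> \<A>"
  proof (rule AI)
    show "{} \<notin> M0" unfolding M0_def using infinite_UNIV_nat by simp
  next
    fix A B :: "nat set" assume "A \<in> M0" "B \<in> M0"
    then show "A \<inter> B \<in> M0" unfolding M0_def by (simp add: Compl_Int)
  next
    fix A B :: "nat set" assume "A \<in> M0" "A \<subseteq> B"
    then show "B \<in> M0" unfolding M0_def
      by (metis Compl_subset_Compl_iff finite_subset mem_Collect_eq)
  qed (simp add: M0_def)
  have "\<exists>M\<in>\<A>. \<forall>X\<in>\<A>. M \<subseteq> X \<longrightarrow> X = M"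
  proof (rule Zorn_Lemma2, intro ballI)
    fix C assume C: "C \<in> chains \<A>"
    show "\<exists>U\<in>\<A>. \<forall>X\<in>C. X \<subseteq> U"
    proof (cases "C = {}")
      case True then show ?thesis using M0 by blast
    next
      case False
      have CA: "C \<subseteq> \<A>" and ch: "\<And>X Y. X\<in>C \<Longrightarrow> Y\<in>C \<Longrightarrow> X \<subseteq> Y \<or> Y \<subseteq> X"
        using C unfolding chains_def chain_subset_def by auto
      have "\<Union>C \<in> \<A>"
      proof (rule AI)
        fix A :: "nat set" assume "finite (- A)"
        obtain Y where "Y \<in> C" using False by blast
        then have "Y \<in> \<A>" using CA by blast
        then have "A \<in> Y" using \<open>finite (- A)\<close> AD1 by blast
        then show "A \<in> \<Union>C" using \<open>Y \<in> C\<close> by blast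
      next
        show "{} \<notin> \<Union>C"
        proof
          assume "{} \<in> \<Union>C"
          then obtain Y where "Y \<in> C" "{} \<in> Y" by blast
          then show False using CA AD2 by blast
        qed
      next
        fix A B :: "nat set" assume "A \<in> \<Union>C" "B \<in> \<Union>C"
        then obtain X Y where XY: "X \<in> C" "Y \<in> C" "A \<in> X" "B \<in> Y" by blast
        then have "X \<subseteq> Y \<or> Y \<subseteq> X" using ch by blast
        then obtain W where W: "W \<in> C" "A \<in> W" "B \<in> W"
          using XY by blast
        then have "W \<in> \<A>" using CA by blast
        then have "A \<inter> B \<in> W" using W AD3 by blast
        then show "A \<inter> B \<in> \<Union>C" using W by blast
      next
        fix A B :: "nat set" assume "A \<in> \<Union>C" "A \<subseteq> B"
        then obtain W where W: "W \<in> C" "A \<in> W" by blast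
        then have "W \<in> \<A>" using CA by blast
        then have "B \<in> W" using W \<open>A \<subseteq> B\<close> AD4 by blast
        then show "B \<in> \<Union>C" using W by blast
      qed
      then show ?thesis by blast
    qed
  qed
  then obtain M where MA: "M \<in> \<A>" and Mmax: "\<And>X. X \<in> \<A> \<Longrightarrow> M \<subseteq> X \<Longrightarrow> X = M" by blast
  have cof: "\<And>A. finite (- A) \<Longrightarrow> A \<in> M" and emp: "{} \<notin> M"
    and int: "\<And>A B. A \<in> M \<Longrightarrow> B \<in> M \<Longrightarrow> A \<inter> B \<in> M"
    and up: "\<And>A B. A \<in> M \<Longrightarrow> A \<subseteq> B \<Longrightarrow> B \<in> M"
    using MA AD1 AD2 AD3 AD4 by blast+
  have ultra: "S \<in> M \<or> - S \<in> M" for S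
  proof (rule ccontr)
    assume nS: "\<not> (S \<in> M \<or> - S \<in> M)"
    define M' where "M' = {B. \<exists>A\<in>M. A \<inter> S \<subseteq> B}"
    have meet: "A \<inter> S \<noteq> {}" if "A \<in> M" for A
    proof
      assume "A \<inter> S = {}"
      then have "A \<subseteq> - S" by blast
      then show False using up[OF that] nS by blast
    qed
    have "M' \<in> \<A>"
    proof (rule AI)
      fix A :: "nat set" assume "finite (- A)"
      then have "A \<in> M" by (rule cof)
      moreover have "A \<inter> S \<subseteq> A" by blast
      ultimately show "A \<in> M'" unfolding M'_def by blast
    next
      show "{} \<notin> M'"
      proof
        assume "{} \<in> M'"
        then obtain A where "A \<in> M" "A \<inter> S \<subseteq> {}" unfolding M'_def by blast
        then show False using meet by blast
      qed
    next
      fix A B assume "A \<in> M'" "B \<in> M'"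
      then obtain A1 B1 where AB: "A1 \<in> M" "B1 \<in> M" "A1 \<inter> S \<subseteq> A" "B1 \<inter> S \<subseteq> B" unfolding M'_def by blast
      have "A1 \<inter> B1 \<in> M" using int AB by blast
      moreover have "(A1 \<inter> B1) \<inter> S \<subseteq> A \<inter> B" using AB by blast
      ultimately show "A \<inter> B \<in> M'" unfolding M'_def by blast
    next
      fix A B assume "A \<in> M'" "A \<subseteq> B"
      then obtain A1 where "A1 \<in> M" "A1 \<inter> S \<subseteq> A" unfolding M'_def by blast
      then have "A1 \<inter> S \<subseteq> B" using \<open>A \<subseteq> B\<close> by blast
      then show "B \<in> M'" unfolding M'_def using \<open>A1 \<in> M\<close> by blast
    qed
    moreover have "M \<subseteq> M'"
    proof
      fix A assume "A \<in> M"
      moreover have "A \<inter> S \<subseteq> A" by blast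
      ultimately show "A \<in> M'" unfolding M'_def by blast
    qed
    ultimately have "M' = M" using Mmax by blast
    moreover have "S \<in> M'"
    proof -
      have "UNIV \<in> M" using cof by simp
      moreover have "UNIV \<inter> S \<subseteq> S" by blast
      ultimately show ?thesis unfolding M'_def by blast
    qed
    ultimately show False using nS by blast
  qed
  define U where "U = Abs_filter (\<lambda>P. {x. P x} \<in> M)"
  have isf: "is_filter (\<lambda>P. {x. P x} \<in> M)"
  proof
    show "{x. True} \<in> M" using cof by simp
  next
    fix P Q assume "{x. P x} \<in> M" "{x. Q x} \<in> M"
    then show "{x. P x \<and> Q x} \<in> M" using int by (simp add: Collect_conj_eq)
  next
    fix P Q assume "\<forall>x. P x \<longrightarrow> Q x" "{x. P x} \<in> M"
    then show "{x. Q x} \<in> M" using up by (metis (mono_tags, lifting) mem_Collect_eq subsetI)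
  qed
  have ev: "eventually P U \<longleftrightarrow> {x. P x} \<in> M" for P
    unfolding U_def using eventually_Abs_filter[OF isf] .
  have "U \<noteq> bot"
    using ev[of "\<lambda>x. False"] emp by (auto simp: eventually_False)
  moreover have "U \<le> sequentially"
    unfolding le_filter_def
  proof (intro allI impI)
    fix P assume "eventually P sequentially"
    then obtain N where "\<forall>n\<ge>N. P n" by (auto simp: eventually_sequentially)
    then have "- {x. P x} \<subseteq> {..<N}" by (auto simp: not_le[symmetric])
    then have "finite (- {x. P x})" using finite_subset by blast
    then show "eventually P U" using ev cof by blast
  qed
  moreover have "\<forall>P. eventually P U \<or> eventually (\<lambda>x. \<not> P x) U"
  proof
    fix P :: "nat \<Rightarrow> bool"
    have "{x. P x} \<in> M \<or> - {x. P x} \<in> M" by (rule ultra)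
    then show "eventually P U \<or> eventually (\<lambda>x. \<not> P x) U"
      unfolding ev by (simp add: Collect_neg_eq)
  qed
  ultimately show ?thesis by blast
qed

lemma ultra_limit_exists:
  fixes f :: "nat \<Rightarrow> real"
  assumes U: "U \<noteq> bot" "\<forall>P. eventually P U \<or> eventually (\<lambda>x. \<not> P x) U"
    and B: "\<And>n. \<bar>f n\<bar> \<le> B"
  shows "\<exists>L. (f \<longlongrightarrow> L) U"
proof -
  have "compact {-B..B}" by simp
  moreover have "filtermap f U \<noteq> bot" using U by (simp add: filtermap_bot_iff)
  moreover have "eventually (\<lambda>x. x \<in> {-B..B}) (filtermap f U)"
    using B unfolding eventually_filtermap
    by (intro always_eventually allI) (metis abs_le_iff atLeastAtMost_iff minus_le_iff)
  ultimately obtain L where L: "inf (nhds L) (filtermap f U) \<noteq> bot"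
    unfolding compact_filter by blast
  have "(f \<longlongrightarrow> L) U"
    unfolding tendsto_def
  proof (intro allI impI)
    fix S :: "real set" assume "open S" "L \<in> S"
    then have e1: "eventually (\<lambda>x. x \<in> S) (nhds L)" by (simp add: eventually_nhds_in_open)
    show "eventually (\<lambda>x. f x \<in> S) U"
    proof (rule ccontr)
      assume "\<not> eventually (\<lambda>x. f x \<in> S) U"
      then have "eventually (\<lambda>x. f x \<notin> S) U" using U(2) by blast
      then have e2: "eventually (\<lambda>x. x \<notin> S) (filtermap f U)" by (simp add: eventually_filtermap)
      have "eventually (\<lambda>x. False) (inf (nhds L) (filtermap f U))"
        using eventually_inf[of "\<lambda>x. False"] e1 e2 by blast
      then show False using L by (simp add: eventually_False)
    qed
  qed
  then show ?thesis by blast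
qed


lemma homeo_metric:
  assumes X: "Metric_space X d" and Y: "Metric_space (f ` X) e" and inj: "inj_on f X"
    and c1: "\<And>x \<epsilon>. x\<in>X \<Longrightarrow> \<epsilon>>0 \<Longrightarrow> \<exists>\<delta>>0. \<forall>y\<in>X. d x y < \<delta> \<longrightarrow> e (f x) (f y) < \<epsilon>"
    and c2: "\<And>x \<epsilon>. x\<in>X \<Longrightarrow> \<epsilon>>0 \<Longrightarrow> \<exists>\<delta>>0. \<forall>y\<in>X. e (f x) (f y) < \<delta> \<longrightarrow> d x y < \<epsilon>"
  shows "homeomorphic_map (Metric_space.mtopology X d) (Metric_space.mtopology (f`X) e) f"
proof -
  interpret MX: Metric_space X d by (rule X)
  interpret MY: Metric_space "f ` X" e by (rule Y)
  define g where "g = inv_into X f"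
  have gf: "\<And>x. x \<in> X \<Longrightarrow> g (f x) = x" using inj unfolding g_def by simp
  have cf: "continuous_map MX.mtopology MY.mtopology f"
    unfolding MX.metric_continuous_map[OF Y] using c1 by blast
  have cg: "continuous_map MY.mtopology MX.mtopology g"
    unfolding MY.metric_continuous_map[OF X]
  proof (intro conjI ballI allI impI)
    show "g ` f ` X \<subseteq> X" using gf by auto
  next
    fix a and \<epsilon> :: real assume "a \<in> f ` X" "\<epsilon> > 0"
    then obtain x where x: "x \<in> X" "a = f x" by blast
    obtain \<delta> where "\<delta> > 0" "\<forall>y\<in>X. e (f x) (f y) < \<delta> \<longrightarrow> d x y < \<epsilon>" using c2[OF x(1) \<open>\<epsilon>>0\<close>] by blast
    then show "\<exists>\<delta>>0. \<forall>b. b \<in> f ` X \<and> e a b < \<delta> \<longrightarrow> d (g a) (g b) < \<epsilon>"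
      using x gf by auto
  qed
  show ?thesis
    unfolding homeomorphic_map_maps homeomorphic_maps_def
    using cf cg gf by (auto simp: g_def)
qed

lemma countable_pow_inj_real:
  assumes "countable A"
  shows "\<exists>\<iota>::'a set \<Rightarrow> real. inj_on \<iota> (Pow A)"
proof -
  obtain h :: "'a \<Rightarrow> nat" where h: "inj_on h A" using assms by (meson countable_def)
  have "inj_on (\<lambda>B. h ` B) (Pow A)"
    using h by (auto simp: inj_on_def inj_on_image_eq_iff)
  moreover obtain k :: "nat set \<Rightarrow> real" where "inj k"
    using nat_sets_eqpoll_reals unfolding eqpoll_def bij_betw_def by blast
  ultimately have "inj_on (k \<circ> (\<lambda>B. h ` B)) (Pow A)"
    by (simp add: comp_inj_on inj_on_subset)
  then show ?thesis by blast
qed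


lemma transfer_iso:
  assumes MZ: "Metric_space Z D" and inj: "inj_on \<iota> Z"
  defines "dT \<equiv> \<lambda>a b. D (inv_into Z \<iota> a) (inv_into Z \<iota> b)"
  shows "Metric_space (\<iota>`Z) dT"
    and "Metric_space.mcomplete Z D \<Longrightarrow> Metric_space.mcomplete (\<iota>`Z) dT"
    and "\<And>a b. a \<in> Z \<Longrightarrow> b \<in> Z \<Longrightarrow> dT (\<iota> a) (\<iota> b) = D a b"
proof -
  interpret Metric_space Z D by (rule MZ)
  have ii: "\<And>a. a \<in> Z \<Longrightarrow> inv_into Z \<iota> (\<iota> a) = a" using inj by simp
  have iZ: "\<And>a. a \<in> \<iota>`Z \<Longrightarrow> inv_into Z \<iota> a \<in> Z" by (simp add: inv_into_into)
  show dd: "\<And>a b. a \<in> Z \<Longrightarrow> b \<in> Z \<Longrightarrow> dT (\<iota> a) (\<iota> b) = D a b" unfolding dT_def using ii by simp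
  show MT: "Metric_space (\<iota>`Z) dT"
  proof
    show "0 \<le> dT x y" for x y unfolding dT_def by simp
    show "dT x y = dT y x" for x y unfolding dT_def using commute by simp
    show "x \<in> \<iota> ` Z \<Longrightarrow> y \<in> \<iota> ` Z \<Longrightarrow> (dT x y = 0) = (x = y)" for x y
      unfolding dT_def using iZ by (metis f_inv_into_f zero)
    show "x \<in> \<iota> ` Z \<Longrightarrow> y \<in> \<iota> ` Z \<Longrightarrow> z \<in> \<iota> ` Z \<Longrightarrow> dT x z \<le> dT x y + dT y z" for x y z
      unfolding dT_def using iZ triangle by blast
  qed
  interpret T: Metric_space "\<iota>`Z" dT by (rule MT)
  assume mc: "mcomplete"
  show "T.mcomplete"
    unfolding T.mcomplete_def
  proof (intro allI impI)
    fix \<sigma> assume c: "T.MCauchy \<sigma>"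
    define \<tau> where "\<tau> = (\<lambda>n. inv_into Z \<iota> (\<sigma> n))"
    have sZ: "\<sigma> n \<in> \<iota>`Z" for n using c unfolding T.MCauchy_def by auto
    have st: "\<And>n. \<sigma> n = \<iota> (\<tau> n)" "\<And>n. \<tau> n \<in> Z"
      using sZ unfolding \<tau>_def by (auto simp: f_inv_into_f iZ)
    have "MCauchy \<tau>"
      using c st unfolding MCauchy_def T.MCauchy_def by (auto simp: dd)
    then obtain x where x: "limitin mtopology \<tau> x sequentially" using mc mcomplete_def by blast
    have "limitin T.mtopology \<sigma> (\<iota> x) sequentially"
      using x unfolding limitin_metric T.limitin_metric by (auto simp: st dd)
    then show "\<exists>x. limitin T.mtopology \<sigma> x sequentially" by blast
  qed
qed

lemma pGH_transfer:
  assumes pg: "pGH_converges Xs ps ds Z z D" and inj: "inj_on \<iota> Z"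
  shows "pGH_converges Xs ps ds (\<iota>`Z) (\<iota> z) (\<lambda>a b. D (inv_into Z \<iota> a) (inv_into Z \<iota> b))"
proof -
  define dT where "dT = (\<lambda>a b. D (inv_into Z \<iota> a) (inv_into Z \<iota> b))"
  have MZ: "Metric_space Z D" and mc: "Metric_space.mcomplete Z D" and zZ: "z \<in> Z"
    using pg unfolding pGH_converges_def by auto
  note tr = transfer_iso[OF MZ inj, folded dT_def]
  have ii: "\<And>a. a \<in> Z \<Longrightarrow> inv_into Z \<iota> (\<iota> a) = a" using inj by simp
  have main: "\<exists>g. (\<forall>x \<in> Metric_space.mball (Xs n) (ds n) (ps n) r. g x \<in> \<iota>`Z) \<and>
             g (ps n) = \<iota> z \<and>
             (\<exists>\<delta><\<epsilon>. \<forall>x \<in> Metric_space.mball (Xs n) (ds n) (ps n) r.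
                        \<forall>y \<in> Metric_space.mball (Xs n) (ds n) (ps n) r.
                          \<bar>ds n x y - dT (g x) (g y)\<bar> \<le> \<delta>) \<and>
             Metric_space.mball (\<iota>`Z) dT (\<iota> z) (r - \<epsilon>) \<subseteq>
               {w \<in> \<iota>`Z. \<exists>x \<in> Metric_space.mball (Xs n) (ds n) (ps n) r. dT w (g x) < \<epsilon>}"
    if H: "\<exists>g. (\<forall>x \<in> Metric_space.mball (Xs n) (ds n) (ps n) r. g x \<in> Z) \<and>
             g (ps n) = z \<and>
             (\<exists>\<delta><\<epsilon>. \<forall>x \<in> Metric_space.mball (Xs n) (ds n) (ps n) r.
                        \<forall>y \<in> Metric_space.mball (Xs n) (ds n) (ps n) r.
                          \<bar>ds n x y - D (g x) (g y)\<bar> \<le> \<delta>) \<and>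
             Metric_space.mball Z D z (r - \<epsilon>) \<subseteq>
               {w \<in> Z. \<exists>x \<in> Metric_space.mball (Xs n) (ds n) (ps n) r. D w (g x) < \<epsilon>}" for n r \<epsilon>
  proof -
    obtain g \<delta> where g1: "\<forall>x \<in> Metric_space.mball (Xs n) (ds n) (ps n) r. g x \<in> Z"
      and g2: "g (ps n) = z" and g3: "\<delta> < \<epsilon>" "\<forall>x \<in> Metric_space.mball (Xs n) (ds n) (ps n) r.
                        \<forall>y \<in> Metric_space.mball (Xs n) (ds n) (ps n) r.
                          \<bar>ds n x y - D (g x) (g y)\<bar> \<le> \<delta>"
      and g4: "Metric_space.mball Z D z (r - \<epsilon>) \<subseteq>
               {w \<in> Z. \<exists>x \<in> Metric_space.mball (Xs n) (ds n) (ps n) r. D w (g x) < \<epsilon>}"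
      using H by blast
    show ?thesis
    proof (intro exI[of _ "\<iota> \<circ> g"] conjI)
      show "\<forall>x \<in> Metric_space.mball (Xs n) (ds n) (ps n) r. (\<iota> \<circ> g) x \<in> \<iota>`Z" using g1 by auto
      show "(\<iota> \<circ> g) (ps n) = \<iota> z" using g2 by simp
      show "\<exists>\<delta><\<epsilon>. \<forall>x \<in> Metric_space.mball (Xs n) (ds n) (ps n) r.
                        \<forall>y \<in> Metric_space.mball (Xs n) (ds n) (ps n) r.
                          \<bar>ds n x y - dT ((\<iota> \<circ> g) x) ((\<iota> \<circ> g) y)\<bar> \<le> \<delta>"
        using g1 g3 ii by (intro exI[of _ \<delta>]) (auto simp: dT_def)
      show "Metric_space.mball (\<iota>`Z) dT (\<iota> z) (r - \<epsilon>) \<subseteq>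
               {w \<in> \<iota>`Z. \<exists>x \<in> Metric_space.mball (Xs n) (ds n) (ps n) r. dT w ((\<iota> \<circ> g) x) < \<epsilon>}"
      proof
        fix w assume "w \<in> Metric_space.mball (\<iota>`Z) dT (\<iota> z) (r - \<epsilon>)"
        then obtain a where a: "a \<in> Z" "w = \<iota> a" "dT (\<iota> z) (\<iota> a) < r - \<epsilon>"
          using Metric_space.in_mball[OF tr(1)] by auto
        then have "a \<in> Metric_space.mball Z D z (r - \<epsilon>)"
          using Metric_space.in_mball[OF MZ] zZ ii by (auto simp: dT_def)
        then obtain x where "x \<in> Metric_space.mball (Xs n) (ds n) (ps n) r" "D a (g x) < \<epsilon>"
          using g4 by blast
        then show "w \<in> {w \<in> \<iota>`Z. \<exists>x \<in> Metric_space.mball (Xs n) (ds n) (ps n) r. dT w ((\<iota> \<circ> g) x) < \<epsilon>}"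
          using a g1 ii by (auto simp: dT_def)
      qed
    qed
  qed
  show ?thesis
    unfolding dT_def[symmetric] pGH_converges_def
  proof (intro conjI allI impI)
    show "Metric_space (\<iota> ` Z) dT" by (rule tr(1))
    show "Metric_space.mcomplete (\<iota> ` Z) dT" by (rule tr(2)[OF mc])
    show "\<iota> z \<in> \<iota> ` Z" using zZ by simp
    fix r \<epsilon> :: real assume "r > 0" "\<epsilon> > 0"
    then obtain n0 where "\<forall>n>n0. \<exists>g. (\<forall>x \<in> Metric_space.mball (Xs n) (ds n) (ps n) r. g x \<in> Z) \<and>
             g (ps n) = z \<and>
             (\<exists>\<delta><\<epsilon>. \<forall>x \<in> Metric_space.mball (Xs n) (ds n) (ps n) r.
                        \<forall>y \<in> Metric_space.mball (Xs n) (ds n) (ps n) r.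
                          \<bar>ds n x y - D (g x) (g y)\<bar> \<le> \<delta>) \<and>
             Metric_space.mball Z D z (r - \<epsilon>) \<subseteq>
               {w \<in> Z. \<exists>x \<in> Metric_space.mball (Xs n) (ds n) (ps n) r. D w (g x) < \<epsilon>}"
      using pg unfolding pGH_converges_def by meson
    then show "\<exists>n0. \<forall>n>n0. \<exists>g. (\<forall>x \<in> Metric_space.mball (Xs n) (ds n) (ps n) r. g x \<in> \<iota>`Z) \<and>
             g (ps n) = \<iota> z \<and>
             (\<exists>\<delta><\<epsilon>. \<forall>x \<in> Metric_space.mball (Xs n) (ds n) (ps n) r.
                        \<forall>y \<in> Metric_space.mball (Xs n) (ds n) (ps n) r.
                          \<bar>ds n x y - dT (g x) (g y)\<bar> \<le> \<delta>) \<and>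
             Metric_space.mball (\<iota>`Z) dT (\<iota> z) (r - \<epsilon>) \<subseteq>
               {w \<in> \<iota>`Z. \<exists>x \<in> Metric_space.mball (Xs n) (ds n) (ps n) r. dT w (g x) < \<epsilon>}"
      using main by blast
  qed
qed


locale ulim =
  fixes X :: "'a set" and d :: "'a \<Rightarrow> 'a \<Rightarrow> real" and lam :: "nat \<Rightarrow> real"
    and q :: "nat \<Rightarrow> 'a" and U :: "nat filter"
  assumes MX: "Metric_space X d" and lam_pos: "\<And>n. lam n > 0" and qX: "\<And>n. q n \<in> X"
    and Unb: "U \<noteq> bot" and Ult: "\<And>P. eventually P U \<or> eventually (\<lambda>x. \<not> P x) U"
    and Useq: "U \<le> sequentially"
begin

interpretation MX: Metric_space X d by (rule MX)

definition dn :: "(nat \<Rightarrow> 'a) \<Rightarrow> (nat \<Rightarrow> 'a) \<Rightarrow> nat \<Rightarrow> real"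
  where "dn v w n = d (v n) (w n) / lam n"

definition S where "S = {w. (\<forall>n. w n \<in> X) \<and> (\<exists>B. \<forall>n. dn w q n \<le> B)}"

definition D where "D v w = (if v \<in> S \<and> w \<in> S then Lim U (dn v w) else 0)"

lemma dn_nonneg: "0 \<le> dn v w n"
  unfolding dn_def using lam_pos[of n] by simp

lemma dn_commute: "dn v w = dn w v"
  unfolding dn_def by (auto simp: MX.commute)

lemma dn_self: "dn v v n = 0" if "v n \<in> X"
  unfolding dn_def using that by simp

lemma dn_triangle: "v n \<in> X \<Longrightarrow> w n \<in> X \<Longrightarrow> u n \<in> X \<Longrightarrow> dn v u n \<le> dn v w n + dn w u n"
proof -
  assume a: "v n \<in> X" "w n \<in> X" "u n \<in> X"
  have "d (v n) (u n) / lam n \<le> (d (v n) (w n) + d (w n) (u n)) / lam n"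
    using lam_pos[of n] MX.triangle[OF a(1,2,3)] by (intro divide_right_mono) auto
  then show ?thesis unfolding dn_def by (simp add: add_divide_distrib)
qed

lemma S_X: "w \<in> S \<Longrightarrow> w n \<in> X" unfolding S_def by auto

lemma q_S: "q \<in> S"
  unfolding S_def using qX dn_self by auto

lemma S_bdd: assumes "w \<in> S" obtains B where "\<And>n. dn w q n \<le> B"
  using assms unfolding S_def by auto

lemma dn_bdd: assumes "v \<in> S" "w \<in> S" shows "\<exists>B. \<forall>n. \<bar>dn v w n\<bar> \<le> B"
proof -
  obtain B1 B2 where "\<And>n. dn v q n \<le> B1" "\<And>n. dn w q n \<le> B2" using assms S_bdd by metis
  then have "\<bar>dn v w n\<bar> \<le> B1 + B2" for n
    using dn_triangle[of v n q w] S_X[OF assms(1)] S_X[OF assms(2)] qX dn_nonneg dn_commute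
    by (metis abs_of_nonneg add_mono order_trans)
  then show ?thesis by blast
qed

lemma D_lim: assumes "v \<in> S" "w \<in> S" shows "(dn v w \<longlongrightarrow> D v w) U"
proof -
  obtain B where "\<forall>n. \<bar>dn v w n\<bar> \<le> B" using dn_bdd[OF assms] by blast
  then obtain L where "(dn v w \<longlongrightarrow> L) U" using ultra_limit_exists[OF Unb] Ult by blast
  then show ?thesis unfolding D_def using tendsto_Lim[OF Unb] assms by metis
qed

lemma D_nonneg: "0 \<le> D v w"
  using D_lim tendsto_lowerbound[OF _ _ Unb] dn_nonneg by (metis always_eventually D_def order_refl)

lemma D_commute: "D v w = D w v"
  unfolding D_def by (auto simp add: dn_commute)

lemma D_self: "v \<in> S \<Longrightarrow> D v v = 0"
proof -
  assume "v \<in> S"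
  then have "dn v v = (\<lambda>n. 0)" using dn_self S_X by auto
  then show ?thesis unfolding D_def using tendsto_Lim[OF Unb] tendsto_const \<open>v \<in> S\<close> by metis
qed

lemma D_triangle: assumes "v \<in> S" "w \<in> S" "u \<in> S" shows "D v u \<le> D v w + D w u"
proof -
  have "((\<lambda>n. dn v w n + dn w u n) \<longlongrightarrow> D v w + D w u) U"
    using D_lim assms by (intro tendsto_add) auto
  moreover have "eventually (\<lambda>n. dn v u n \<le> dn v w n + dn w u n) U"
    using dn_triangle S_X assms by (intro always_eventually) auto
  ultimately show ?thesis using tendsto_le[OF Unb] D_lim[OF assms(1,3)] by blast
qed

lemma D_le: "v \<in> S \<Longrightarrow> w \<in> S \<Longrightarrow> eventually (\<lambda>n. dn v w n \<le> c) U \<Longrightarrow> D v w \<le> c"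
  using D_lim tendsto_upperbound[OF _ _ Unb] by blast

lemma D_ge: "v \<in> S \<Longrightarrow> w \<in> S \<Longrightarrow> eventually (\<lambda>n. c \<le> dn v w n) U \<Longrightarrow> c \<le> D v w"
  using D_lim tendsto_lowerbound[OF _ _ Unb] by blast

lemma D_lt_ev: "v \<in> S \<Longrightarrow> w \<in> S \<Longrightarrow> D v w < c \<Longrightarrow> eventually (\<lambda>n. dn v w n < c) U"
  using D_lim order_tendstoD(2) by blast

lemma D_gt_ev: "v \<in> S \<Longrightarrow> w \<in> S \<Longrightarrow> c < D v w \<Longrightarrow> eventually (\<lambda>n. c < dn v w n) U"
  using D_lim order_tendstoD(1) by blast

definition rep where "rep v = (SOME w. w \<in> S \<and> D v w = 0)"

lemma rep: assumes "v \<in> S" shows "rep v \<in> S" "D v (rep v) = 0"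
proof -
  have "\<exists>w. w \<in> S \<and> D v w = 0" using assms D_self by blast
  then have "rep v \<in> S \<and> D v (rep v) = 0" unfolding rep_def by (rule someI_ex)
  then show "rep v \<in> S" "D v (rep v) = 0" by auto
qed

lemma D_zero_cong: assumes "v \<in> S" "w \<in> S" "D v w = 0" "u \<in> S" shows "D v u = D w u"
proof -
  have "D v u \<le> D w u" using D_triangle[of v w u] assms by simp
  moreover have "D w u \<le> D v u" using D_triangle[of w v u] assms D_commute[of v w] by simp
  ultimately show ?thesis by simp
qed

lemma rep_eq: assumes "v \<in> S" "w \<in> S" "D v w = 0" shows "rep v = rep w"
proof -
  have "(\<lambda>u. u \<in> S \<and> D v u = 0) = (\<lambda>u. u \<in> S \<and> D w u = 0)"
    using D_zero_cong[OF assms] by auto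
  then show ?thesis unfolding rep_def by simp
qed

lemma D_rep1: assumes "v \<in> S" "w \<in> S" shows "D (rep v) w = D v w"
  using D_zero_cong[OF rep(1)[OF assms(1)] assms(1) _ assms(2)] rep[OF assms(1)] D_commute by metis

lemma D_rep: assumes "v \<in> S" "w \<in> S" shows "D (rep v) (rep w) = D v w"
  using D_rep1[OF assms(1) rep(1)[OF assms(2)]] D_rep1[OF assms(2) assms(1)] rep[OF assms(1)] rep[OF assms(2)]
    D_commute by metis

definition Z where "Z = rep ` S"

lemma Z_S: "a \<in> Z \<Longrightarrow> a \<in> S" unfolding Z_def using rep by auto

lemma rep_Z: assumes "a \<in> Z" shows "rep a = a"
proof -
  obtain v where v: "v \<in> S" "a = rep v" using assms Z_def by auto
  have "rep (rep v) = rep v" using rep_eq[of "rep v" v] rep[OF v(1)] v D_commute by metis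
  then show ?thesis using v by simp
qed

lemma MZ: "Metric_space Z D"
proof
  show "0 \<le> D x y" for x y using D_nonneg by auto
  show "D x y = D y x" for x y using D_commute by auto
  show "(D x y = 0) = (x = y)" if "x \<in> Z" "y \<in> Z" for x y
    using that Z_S rep_eq rep_Z D_self by metis
  show "D x z \<le> D x y + D y z" if "x \<in> Z" "y \<in> Z" "z \<in> Z" for x y z
    using that Z_S D_triangle by auto
qed

end

context ulim begin

lemma ev_ge: "eventually (\<lambda>n. j \<le> n) U"
  using Useq unfolding le_filter_def by (auto simp: eventually_sequentially)

lemma small_inv: assumes "(\<epsilon>::real) > 0" obtains j :: nat where "1 / (real j + 1) < \<epsilon>"
proof -
  obtain j :: nat where "1 / \<epsilon> < real j" using reals_Archimedean2 by blast
  then have "1 / \<epsilon> < real j + 1" by simp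
  then have "1 < (real j + 1) * \<epsilon>" using assms by (simp add: divide_less_eq)
  then have "1 / (real j + 1) < \<epsilon>" by (simp add: divide_less_eq mult.commute)
  then show ?thesis using that by blast
qed

lemma mcomplete_Z: "Metric_space.mcomplete Z D"
proof -
  interpret MZ: Metric_space Z D by (rule MZ)
  show ?thesis unfolding MZ.mcomplete_def
  proof (intro allI impI)
    fix \<sigma> assume "MZ.MCauchy \<sigma>"
    then have \<sigma>Z: "\<And>n. \<sigma> n \<in> Z" and cau: "\<forall>\<epsilon>>0. \<exists>N. \<forall>n n'. N \<le> n \<longrightarrow> N \<le> n' \<longrightarrow> D (\<sigma> n) (\<sigma> n') < \<epsilon>"
      unfolding MZ.MCauchy_def by auto
    have "\<forall>\<epsilon>. \<exists>N. \<epsilon> > 0 \<longrightarrow> (\<forall>n n'. N \<le> n \<longrightarrow> N \<le> n' \<longrightarrow> D (\<sigma> n) (\<sigma> n') < \<epsilon>)"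
      using cau by auto
    then have "\<exists>Nf. \<forall>\<epsilon>. \<epsilon> > 0 \<longrightarrow> (\<forall>n n'. Nf \<epsilon> \<le> n \<longrightarrow> Nf \<epsilon> \<le> n' \<longrightarrow> D (\<sigma> n) (\<sigma> n') < \<epsilon>)"
      by (rule choice)
    then obtain Nf where Nf0: "\<forall>\<epsilon>. \<epsilon> > 0 \<longrightarrow> (\<forall>n n'. Nf \<epsilon> \<le> n \<longrightarrow> Nf \<epsilon> \<le> n' \<longrightarrow> D (\<sigma> n) (\<sigma> n') < \<epsilon>)"
      by blast
    have Nf: "\<And>\<epsilon> n n'. \<epsilon>>0 \<Longrightarrow> Nf \<epsilon> \<le> n \<Longrightarrow> Nf \<epsilon> \<le> n' \<Longrightarrow> D (\<sigma> n) (\<sigma> n') < \<epsilon>"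
      using Nf0 by blast
    define Nk where "Nk k = Max ((\<lambda>i. Nf (1/(real i+1))) ` {..k})" for k
    have Nk_ge: "Nf (1/(real i+1)) \<le> Nk k" if "i \<le> k" for i k
      unfolding Nk_def using that by (intro Max_ge) auto
    have Nk_mono: "Nk j \<le> Nk k" if "j \<le> k" for j k
      unfolding Nk_def[of j] using that Nk_ge by (subst Max_le_iff) auto
    define c where "c k = \<sigma> (Nk k)" for k
    have cZ: "c k \<in> Z" for k unfolding c_def using \<sigma>Z by simp
    have cS: "c k \<in> S" for k using cZ Z_S by blast
    have cc: "D (c j) (c k) < 1/(real j+1)" if "j \<le> k" for j k
      unfolding c_def using Nf[of "1/(real j+1)"] Nk_ge[of j j] Nk_ge[of j k] that by auto
    define F where "F k = {n. \<forall>i\<in>{..k}. \<forall>j\<in>{..i}. dn (c j) (c i) n < 1/(real j+1)}" for k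
    have evF: "eventually (\<lambda>n. n \<in> F k) U" for k
      unfolding F_def mem_Collect_eq
      by (intro eventually_ball_finite ballI D_lt_ev cS cc finite_atMost) auto
    have F0: "n \<in> F 0" for n
      unfolding F_def using dn_self[of "c 0" n] S_X[OF cS] by auto
    define K where "K n = (GREATEST k. k \<le> n \<and> n \<in> F k)" for n
    have K: "K n \<le> n \<and> n \<in> F (K n)" for n
      unfolding K_def by (rule GreatestI_nat[of _ 0 n]) (auto simp: F0)
    have K_ge: "j \<le> K n" if "j \<le> n" "n \<in> F j" for j n
      unfolding K_def by (rule Greatest_le_nat[of _ j n]) (use that in auto)
    define w where "w n = c (K n) n" for n
    have wX: "w n \<in> X" for n unfolding w_def using S_X[OF cS] by simp
    have w_c: "dn (c j) w n < 1/(real j+1)" if "j \<le> n" "n \<in> F j" for j n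
    proof -
      have "j \<le> K n" by (rule K_ge[OF that])
      then have "dn (c j) (c (K n)) n < 1/(real j+1)" using K[of n] unfolding F_def by auto
      then show ?thesis unfolding dn_def w_def by simp
    qed
    obtain B0 where B0: "\<And>n. dn (c 0) q n \<le> B0" using S_bdd[OF cS[of 0]] by metis
    have wS: "w \<in> S"
      unfolding S_def
    proof (intro CollectI conjI allI exI)
      fix n
      show "w n \<in> X" by (rule wX)
      have "dn (c 0) w n < 1" using w_c[of 0 n] F0 by simp
      then have "dn w (c 0) n < 1" by (simp add: dn_commute)
      moreover have "dn w q n \<le> dn w (c 0) n + dn (c 0) q n"
        using dn_triangle wX S_X[OF cS] qX by blast
      ultimately show "dn w q n \<le> 1 + B0" using B0[of n] by linarith
    qed
    have Dcw: "D (c j) w \<le> 1/(real j+1)" for j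
    proof (rule D_le[OF cS wS])
      show "eventually (\<lambda>n. dn (c j) w n \<le> 1/(real j+1)) U"
        using eventually_conj[OF evF[of j] ev_ge[of j]] by eventually_elim (use w_c in force)
    qed
    define l where "l = rep w"
    have lZ: "l \<in> Z" unfolding l_def Z_def using wS by blast
    have Dcl: "D (c j) l \<le> 1/(real j+1)" for j
    proof -
      have "D (c j) l = D (rep (c j)) (rep w)" unfolding l_def using rep_Z[OF cZ[of j]] by simp
      also have "\<dots> = D (c j) w" using D_rep[OF cS wS] .
      finally show ?thesis using Dcw[of j] by simp
    qed
    have "limitin MZ.mtopology \<sigma> l sequentially"
      unfolding MZ.limitin_metric
    proof (intro conjI allI impI lZ)
      fix \<epsilon> :: real assume "\<epsilon> > 0"
      then obtain j where j: "1/(real j+1) < \<epsilon>/2" using small_inv[of "\<epsilon>/2"] by auto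
      show "eventually (\<lambda>n. \<sigma> n \<in> Z \<and> D (\<sigma> n) l < \<epsilon>) sequentially"
        unfolding eventually_sequentially
      proof (intro exI allI impI conjI)
        fix n assume n: "Nk j \<le> n"
        show "\<sigma> n \<in> Z" by (rule \<sigma>Z)
        have "D (\<sigma> n) (c j) < 1/(real j+1)"
          unfolding c_def using Nf[of "1/(real j+1)" n "Nk j"] Nk_ge[of j j] n by auto
        moreover have "D (\<sigma> n) l \<le> D (\<sigma> n) (c j) + D (c j) l"
          using D_triangle Z_S \<sigma>Z cS lZ by blast
        ultimately show "D (\<sigma> n) l < \<epsilon>" using Dcl[of j] j by linarith
      qed
    qed
    then show "\<exists>x. limitin MZ.mtopology \<sigma> x sequentially" by blast
  qed
qed

end

lemma mdiam_le: "mdiam d A \<le> ereal r \<longleftrightarrow> (\<forall>x\<in>A. \<forall>y\<in>A. d x y \<le> r)"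
  unfolding mdiam_def by (auto simp: SUP_le_iff)

lemma nat_ceiling_bound: assumes a: "real m \<le> x" shows "m \<le> nat \<lceil>x\<rceil>"
proof -
  have "x \<le> of_int \<lceil>x\<rceil>" by (rule le_of_int_ceiling)
  then have "real m \<le> of_int \<lceil>x\<rceil>" using a by linarith
  then have "int m \<le> \<lceil>x\<rceil>" by linarith
  then show ?thesis by simp
qed

lemma doubling_cover:
  assumes "doubling_mspace X d"
  shows "\<exists>C :: real. C \<ge> 1 \<and> (\<forall>k A r. A \<subseteq> X \<longrightarrow> (\<forall>x\<in>A. \<forall>y\<in>A. d x y \<le> r) \<longrightarrow>
     (\<exists>F. finite F \<and> real (card F) \<le> C^k \<and> A \<subseteq> \<Union>F \<and> (\<forall>B\<in>F. B \<subseteq> X \<and> (\<forall>x\<in>B. \<forall>y\<in>B. d x y \<le> r / 2^k))))"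
proof -
  have "\<exists>C::real. C \<ge> 1 \<and> (\<forall>A. A \<subseteq> X \<longrightarrow>
        (\<exists>F. finite F \<and> real (card F) \<le> C \<and> A \<subseteq> \<Union>F \<and>
             (\<forall>B\<in>F. B \<subseteq> X \<and> mdiam d B \<le> mdiam d A / 2)))"
    using assms unfolding doubling_mspace_def .
  then obtain C :: real where C1: "C \<ge> 1" and C0: "\<forall>A. A \<subseteq> X \<longrightarrow>
        (\<exists>F. finite F \<and> real (card F) \<le> C \<and> A \<subseteq> \<Union>F \<and>
             (\<forall>B\<in>F. B \<subseteq> X \<and> mdiam d B \<le> mdiam d A / 2))"
    by blast
  note C = C0[rule_format]
  have main: "\<exists>F. finite F \<and> real (card F) \<le> C^k \<and> A \<subseteq> \<Union>F \<and> (\<forall>B\<in>F. B \<subseteq> X \<and> (\<forall>x\<in>B. \<forall>y\<in>B. d x y \<le> r / 2^k))"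
    if "A \<subseteq> X" "\<forall>x\<in>A. \<forall>y\<in>A. d x y \<le> r" for k A r
  proof (induction k)
    case 0
    show ?case using that by (intro exI[of _ "{A}"]) auto
  next
    case (Suc k)
    from Suc.IH obtain F where F0: "finite F" "real (card F) \<le> C^k" "A \<subseteq> \<Union>F"
      "\<forall>B\<in>F. B \<subseteq> X \<and> (\<forall>x\<in>B. \<forall>y\<in>B. d x y \<le> r / 2^k)" by (elim exE conjE)
    have F: "finite F" "real (card F) \<le> C^k" "A \<subseteq> \<Union>F"
      "\<And>B. B\<in>F \<Longrightarrow> B \<subseteq> X \<and> (\<forall>x\<in>B. \<forall>y\<in>B. d x y \<le> r / 2^k)"
      using F0 by auto
    have "\<forall>B\<in>F. \<exists>G. finite G \<and> real (card G) \<le> C \<and> B \<subseteq> \<Union>G \<and>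
             (\<forall>B'\<in>G. B' \<subseteq> X \<and> mdiam d B' \<le> mdiam d B / 2)"
    proof
      fix B assume "B \<in> F"
      then have "B \<subseteq> X" using F(4) by blast
      then show "\<exists>G. finite G \<and> real (card G) \<le> C \<and> B \<subseteq> \<Union>G \<and>
             (\<forall>B'\<in>G. B' \<subseteq> X \<and> mdiam d B' \<le> mdiam d B / 2)" by (rule C)
    qed
    from bchoice[OF this] obtain G where G0: "\<forall>B\<in>F. finite (G B) \<and> real (card (G B)) \<le> C \<and> B \<subseteq> \<Union>(G B) \<and>
             (\<forall>B'\<in>G B. B' \<subseteq> X \<and> mdiam d B' \<le> mdiam d B / 2)"
      by blast
    have G: "\<And>B. B \<in> F \<Longrightarrow> finite (G B) \<and> real (card (G B)) \<le> C \<and> B \<subseteq> \<Union>(G B) \<and>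
             (\<forall>B'\<in>G B. B' \<subseteq> X \<and> mdiam d B' \<le> mdiam d B / 2)"
      using G0 by blast
    define F' where "F' = (\<Union>B\<in>F. G B)"
    have fin: "finite F'" unfolding F'_def using F(1) G by (intro finite_UN_I) auto
    have "card F' \<le> (\<Sum>B\<in>F. card (G B))" unfolding F'_def by (rule card_UN_le[OF F(1)])
    then have "real (card F') \<le> real (\<Sum>B\<in>F. card (G B))" by (simp only: of_nat_le_iff)
    also have "\<dots> = (\<Sum>B\<in>F. real (card (G B)))" by simp
    also have "\<dots> \<le> real (card F) * C" using G by (intro sum_bounded_above) auto
    also have "\<dots> \<le> C^k * C" using F(2) C1 by (intro mult_right_mono) auto
    finally have cardF': "real (card F') \<le> C ^ Suc k" by (simp add: mult.commute)
    have cov: "A \<subseteq> \<Union>F'"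
    proof
      fix x assume "x \<in> A"
      then obtain B where "B \<in> F" "x \<in> B" using F(3) by blast
      moreover have "B \<subseteq> \<Union>(G B)" using G[OF \<open>B \<in> F\<close>] by blast
      ultimately show "x \<in> \<Union>F'" unfolding F'_def by blast
    qed
    have diam: "B' \<subseteq> X \<and> (\<forall>x\<in>B'. \<forall>y\<in>B'. d x y \<le> r / 2 ^ Suc k)" if B'F: "B' \<in> F'" for B'
    proof -
      obtain B where B: "B \<in> F" "B' \<in> G B" using B'F unfolding F'_def by blast
      have HB: "\<forall>x\<in>B. \<forall>y\<in>B. d x y \<le> r / 2^k" using F(4)[OF B(1)] by blast
      have "mdiam d B \<le> ereal (r / 2^k)" using HB by (simp only: mdiam_le)
      have "mdiam d B' \<le> mdiam d B / 2" using G[OF B(1)] B(2) by blast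
      also have "\<dots> = mdiam d B / ereal 2" by simp
      also have "\<dots> \<le> ereal (r / 2^k) / ereal 2"
        using \<open>mdiam d B \<le> ereal (r / 2^k)\<close> by (intro ereal_divide_right_mono) auto
      also have "\<dots> = ereal (r / 2 ^ Suc k)" by simp
      finally have "mdiam d B' \<le> ereal (r / 2 ^ Suc k)" .
      then have "\<forall>x\<in>B'. \<forall>y\<in>B'. d x y \<le> r / 2 ^ Suc k" by (simp only: mdiam_le)
      moreover have "B' \<subseteq> X" using G[OF B(1)] B(2) by blast
      ultimately show ?thesis by blast
    qed
    show ?case
    proof (intro exI[of _ F'] conjI)
      show "finite F'" by (rule fin)
      show "real (card F') \<le> C ^ Suc k" by (rule cardF')
      show "A \<subseteq> \<Union>F'" by (rule cov)
      show "\<forall>B\<in>F'. B \<subseteq> X \<and> (\<forall>x\<in>B. \<forall>y\<in>B. d x y \<le> r / 2 ^ Suc k)" using diam by blast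
    qed
  qed
  show ?thesis
  proof (intro exI[of _ C] conjI allI impI)
    show "1 \<le> C" by (rule C1)
    fix k A r assume "A \<subseteq> X" "\<forall>x\<in>A. \<forall>y\<in>A. d x y \<le> r"
    then show "\<exists>F. finite F \<and> real (card F) \<le> C^k \<and> A \<subseteq> \<Union>F \<and> (\<forall>B\<in>F. B \<subseteq> X \<and> (\<forall>x\<in>B. \<forall>y\<in>B. d x y \<le> r / 2^k))"
      by (rule main)
  qed
qed

lemma sep_card_bound:
  assumes "doubling_mspace X d"
  shows "\<exists>C :: real. C \<ge> 1 \<and> (\<forall>k P r. P \<subseteq> X \<longrightarrow> finite P \<longrightarrow> (\<forall>x\<in>P. \<forall>y\<in>P. d x y \<le> r) \<longrightarrow>
     (\<forall>x\<in>P. \<forall>y\<in>P. x \<noteq> y \<longrightarrow> r / 2^k < d x y) \<longrightarrow> real (card P) \<le> C^k)"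
proof -
  obtain C where C1: "C \<ge> 1" and C0: "\<forall>k A r. A \<subseteq> X \<longrightarrow> (\<forall>x\<in>A. \<forall>y\<in>A. d x y \<le> r) \<longrightarrow>
     (\<exists>F. finite F \<and> real (card F) \<le> C^k \<and> A \<subseteq> \<Union>F \<and> (\<forall>B\<in>F. B \<subseteq> X \<and> (\<forall>x\<in>B. \<forall>y\<in>B. d x y \<le> r / 2^k)))"
    using doubling_cover[OF assms] by (elim exE conjE)
  note C = C0[rule_format]
  have "real (card P) \<le> C^k" if P: "P \<subseteq> X" "finite P" "\<forall>x\<in>P. \<forall>y\<in>P. d x y \<le> r"
     "\<forall>x\<in>P. \<forall>y\<in>P. x \<noteq> y \<longrightarrow> r / 2^k < d x y" for k P r
  proof -
    from mp[OF mp[OF C0[THEN spec[of _ k], THEN spec, THEN spec] P(1)] P(3)] obtain F where F0: "finite F" "real (card F) \<le> C^k" "P \<subseteq> \<Union>F"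
      "\<forall>B\<in>F. B \<subseteq> X \<and> (\<forall>x\<in>B. \<forall>y\<in>B. d x y \<le> r / 2^k)" by (elim exE conjE)
    have F: "finite F" "real (card F) \<le> C^k" "P \<subseteq> \<Union>F"
      "\<And>B. B\<in>F \<Longrightarrow> (\<forall>x\<in>B. \<forall>y\<in>B. d x y \<le> r / 2^k)" using F0 by auto
    define f where "f x = (SOME B. B \<in> F \<and> x \<in> B)" for x
    have f: "f x \<in> F \<and> x \<in> f x" if "x \<in> P" for x
    proof -
      have "\<exists>B. B \<in> F \<and> x \<in> B" using F(3) that by blast
      then show ?thesis unfolding f_def by (rule someI_ex)
    qed
    have "inj_on f P"
    proof (rule inj_onI)
      fix x y assume xy: "x \<in> P" "y \<in> P" "f x = f y"
      show "x = y"
      proof (rule ccontr)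
        assume "x \<noteq> y"
        then have "r / 2^k < d x y" using P(4) xy by blast
        moreover have "d x y \<le> r / 2^k" using F(4)[of "f x"] f[OF xy(1)] f[OF xy(2)] xy(3) by auto
        ultimately show False by simp
      qed
    qed
    then have "card P \<le> card F" using f F(1) by (intro card_inj_on_le[of f P F]) auto
    then have "real (card P) \<le> real (card F)" by simp
    then show ?thesis using F(2) by linarith
  qed
  then show ?thesis using C1 by (intro exI[of _ C]) simp
qed


context ulim begin

definition z0 where "z0 = rep q"

lemma z0Z: "z0 \<in> Z" unfolding z0_def Z_def using q_S by blast

lemma D_z0: "a \<in> S \<Longrightarrow> D z0 a = D q a"
  unfolding z0_def by (rule D_rep1[OF q_S])

lemma d_dn: "d (v n) (w n) = lam n * dn v w n"
  using lam_pos[of n] unfolding dn_def by simp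

lemma sep_Z_bound:
  assumes dbl: "doubling_mspace X d" and e: "\<epsilon> > 0"
  shows "\<exists>M::nat. \<forall>P. P \<subseteq> Z \<longrightarrow> finite P \<longrightarrow> (\<forall>a\<in>P. D z0 a < R) \<longrightarrow>
           (\<forall>a\<in>P. \<forall>b\<in>P. a \<noteq> b \<longrightarrow> \<epsilon> \<le> D a b) \<longrightarrow> card P \<le> M"
proof -
  obtain C :: real where C1: "C \<ge> 1" and C0: "\<forall>k P r. P \<subseteq> X \<longrightarrow> finite P \<longrightarrow> (\<forall>x\<in>P. \<forall>y\<in>P. d x y \<le> r) \<longrightarrow>
     (\<forall>x\<in>P. \<forall>y\<in>P. x \<noteq> y \<longrightarrow> r / 2^k < d x y) \<longrightarrow> real (card P) \<le> C^k"
    using sep_card_bound[OF dbl] by (elim exE conjE)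
  define R' where "R' = max R 0 + 1"
  have R'pos: "R' > 0" and RR': "R \<le> R'" unfolding R'_def by auto
  obtain k :: nat where k: "4 * R' / \<epsilon> < 2 ^ k"
    using real_arch_pow[of 2 "4 * R' / \<epsilon>"] by auto
  have "4 * R' < 2 ^ k * \<epsilon>" using k e by (simp add: pos_divide_less_eq)
  then have "2 * R' < (\<epsilon>/2) * 2^k" by (simp add: mult.commute)
  then have kk: "2 * R' / 2^k < \<epsilon>/2" by (simp add: pos_divide_less_eq)
  have "card P \<le> nat \<lceil>C^k\<rceil>" if P: "P \<subseteq> Z" "finite P" "\<forall>a\<in>P. D z0 a < R"
           "\<forall>a\<in>P. \<forall>b\<in>P. a \<noteq> b \<longrightarrow> \<epsilon> \<le> D a b" for P
  proof -
    have PS: "\<And>a. a \<in> P \<Longrightarrow> a \<in> S" using P(1) Z_S by blast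
    have ev1: "eventually (\<lambda>n. \<forall>a\<in>P. dn q a n < R) U"
    proof (rule eventually_ball_finite[OF P(2)], rule ballI)
      fix a assume "a \<in> P"
      then have "D q a < R" using P(3) D_z0 PS by auto
      then show "eventually (\<lambda>n. dn q a n < R) U" using D_lt_ev q_S PS \<open>a \<in> P\<close> by blast
    qed
    have ev2: "eventually (\<lambda>n. \<forall>a\<in>P. \<forall>b\<in>P. a \<noteq> b \<longrightarrow> \<epsilon>/2 < dn a b n) U"
    proof (rule eventually_ball_finite[OF P(2)], rule ballI, rule eventually_ball_finite[OF P(2)], rule ballI)
      fix a b assume ab: "a \<in> P" "b \<in> P"
      show "eventually (\<lambda>n. a \<noteq> b \<longrightarrow> \<epsilon>/2 < dn a b n) U"
      proof (cases "a = b")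
        case True then show ?thesis by simp
      next
        case False
        then have "\<epsilon>/2 < D a b" using P(4) ab e by fastforce
        then have "eventually (\<lambda>n. \<epsilon>/2 < dn a b n) U" using D_gt_ev PS ab by blast
        then show ?thesis by (rule eventually_mono) simp
      qed
    qed
    have "\<exists>n. (\<forall>a\<in>P. dn q a n < R) \<and> (\<forall>a\<in>P. \<forall>b\<in>P. a \<noteq> b \<longrightarrow> \<epsilon>/2 < dn a b n)"
      by (rule eventually_happens'[OF Unb eventually_conj[OF ev1 ev2]])
    then obtain n where n1: "\<forall>a\<in>P. dn q a n < R" and n2: "\<forall>a\<in>P. \<forall>b\<in>P. a \<noteq> b \<longrightarrow> \<epsilon>/2 < dn a b n"
      by (elim exE conjE)
    define Pn where "Pn = (\<lambda>a. a n) ` P"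
    have inj: "inj_on (\<lambda>a. a n) P"
    proof (rule inj_onI)
      fix a b assume ab: "a \<in> P" "b \<in> P" "a n = b n"
      show "a = b"
      proof (rule ccontr)
        assume "a \<noteq> b"
        then have "\<epsilon>/2 < dn a b n" using n2 ab by blast
        moreover have "dn a b n = 0" unfolding dn_def using ab(3) Metric_space.zero[OF MX, of "b n" "b n"] S_X PS ab(2) by simp
        ultimately show False using e by simp
      qed
    qed
    have PnX: "Pn \<subseteq> X" unfolding Pn_def using S_X PS by blast
    have finPn: "finite Pn" unfolding Pn_def using P(2) by simp
    define r where "r = lam n * (2 * R')"
    have dist: "\<forall>x\<in>Pn. \<forall>y\<in>Pn. d x y \<le> r"
    proof (intro ballI)
      fix x y assume "x \<in> Pn" "y \<in> Pn"
      then obtain a b where ab: "a \<in> P" "b \<in> P" "x = a n" "y = b n" unfolding Pn_def by blast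
      have "dn a b n \<le> dn a q n + dn q b n" using dn_triangle S_X PS ab qX by blast
      also have "\<dots> < 2 * R'" using n1 ab RR' dn_commute[of a q] by (smt (verit))
      finally have "dn a b n \<le> 2 * R'" by simp
      then show "d x y \<le> r" unfolding r_def using ab d_dn[of a n b] lam_pos[of n]
        by (simp add: mult_left_mono)
    qed
    have sep: "\<forall>x\<in>Pn. \<forall>y\<in>Pn. x \<noteq> y \<longrightarrow> r / 2^k < d x y"
    proof (intro ballI impI)
      fix x y assume "x \<in> Pn" "y \<in> Pn" "x \<noteq> y"
      then obtain a b where ab: "a \<in> P" "b \<in> P" "x = a n" "y = b n" "a \<noteq> b" unfolding Pn_def by blast
      have "r / 2^k = lam n * (2 * R' / 2^k)" unfolding r_def by (rule times_divide_eq_right[symmetric])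
      also have "\<dots> < lam n * (\<epsilon>/2)" by (rule mult_strict_left_mono[OF kk lam_pos])
      also have "\<dots> < lam n * dn a b n" using n2 ab lam_pos[of n] by simp
      also have "\<dots> = d x y" using d_dn[of a n b] ab by simp
      finally show "r / 2^k < d x y" .
    qed
    have "real (card Pn) \<le> C^k"
      using C0 PnX finPn dist sep by blast
    moreover have "card Pn = card P" unfolding Pn_def using inj by (simp add: card_image)
    ultimately show ?thesis using nat_ceiling_bound by simp
  qed
  then show ?thesis by blast
qed

lemma Z_tb:
  assumes dbl: "doubling_mspace X d" and e: "\<epsilon> > 0"
  shows "\<exists>N. finite N \<and> N \<subseteq> Z \<and> (\<forall>a\<in>Z. D z0 a < R \<longrightarrow> (\<exists>b\<in>N. D a b < \<epsilon>))"
proof -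
  obtain M :: nat where M: "\<forall>P. P \<subseteq> Z \<longrightarrow> finite P \<longrightarrow> (\<forall>a\<in>P. D z0 a < R) \<longrightarrow>
           (\<forall>a\<in>P. \<forall>b\<in>P. a \<noteq> b \<longrightarrow> \<epsilon> \<le> D a b) \<longrightarrow> card P \<le> M"
    using sep_Z_bound[OF dbl e, where R=R] by (elim exE)
  define Good where "Good P \<longleftrightarrow> P \<subseteq> Z \<and> finite P \<and> (\<forall>a\<in>P. D z0 a < R) \<and>
           (\<forall>a\<in>P. \<forall>b\<in>P. a \<noteq> b \<longrightarrow> \<epsilon> \<le> D a b)" for P
  define Qm where "Qm m \<longleftrightarrow> (\<exists>P. Good P \<and> card P = m)" for m
  have "Qm 0" unfolding Qm_def Good_def by (intro exI[of _ "{}"]) simp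
  moreover have "\<forall>m. Qm m \<longrightarrow> m \<le> M"
  proof (intro allI impI)
    fix m assume "Qm m"
    then obtain P where GP: "Good P" and cP: "card P = m" unfolding Qm_def by (elim exE conjE)
    have "P \<subseteq> Z \<longrightarrow> finite P \<longrightarrow> (\<forall>a\<in>P. D z0 a < R) \<longrightarrow>
           (\<forall>a\<in>P. \<forall>b\<in>P. a \<noteq> b \<longrightarrow> \<epsilon> \<le> D a b) \<longrightarrow> card P \<le> M" using M by (rule spec)
    then show "m \<le> M" using GP cP unfolding Good_def by simp
  qed
  ultimately have "\<exists>m. Qm m \<and> (\<forall>m'. Qm m' \<longrightarrow> m' \<le> m)"
    by (rule Nat.ex_has_greatest_nat[of Qm 0 M])
  then obtain m where m: "Qm m" and mmax0: "\<forall>m'. Qm m' \<longrightarrow> m' \<le> m" by (elim exE conjE)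
  have mmax: "\<And>m'. Qm m' \<Longrightarrow> m' \<le> m" using mmax0 by simp
  obtain P where P: "Good P" "card P = m" using m unfolding Qm_def by (elim exE conjE)
  have PG: "P \<subseteq> Z" "finite P" "\<forall>a\<in>P. D z0 a < R" "\<forall>a\<in>P. \<forall>b\<in>P. a \<noteq> b \<longrightarrow> \<epsilon> \<le> D a b"
    using P(1) unfolding Good_def by auto
  have "\<exists>b\<in>P. D a b < \<epsilon>" if a: "a \<in> Z" "D z0 a < R" for a
  proof (rule ccontr)
    assume na: "\<not> (\<exists>b\<in>P. D a b < \<epsilon>)"
    have aP: "a \<notin> P"
    proof
      assume "a \<in> P"
      moreover have "D a a = 0" using D_self Z_S a(1) by blast
      ultimately show False using na e by force
    qed
    have "Good (insert a P)"
      unfolding Good_def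
    proof (intro conjI ballI impI)
      show "insert a P \<subseteq> Z" using PG(1) a(1) by blast
      show "finite (insert a P)" using PG(2) by simp
      fix x assume "x \<in> insert a P"
      then show "D z0 x < R" using PG(3) a(2) by blast
    next
      fix x y assume xy: "x \<in> insert a P" "y \<in> insert a P" "x \<noteq> y"
      show "\<epsilon> \<le> D x y"
      proof (cases "x = a")
        case True
        then have "y \<in> P" using xy by blast
        then show ?thesis using na True by force
      next
        case False
        note xa = False
        show ?thesis
        proof (cases "y = a")
          case True
          then have "x \<in> P" using xy xa by blast
          then show ?thesis using na True D_commute[of x a] by force
        next
          case False
          then show ?thesis using xy xa PG(4) by blast
        qed
      qed
    qed
    then have "Qm (Suc m)" unfolding Qm_def using P(2) aP PG(2) by (intro exI[of _ "insert a P"]) simp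
    then show False using mmax by fastforce
  qed
  then show ?thesis using PG(1,2) by blast
qed

end

lemma in_mb: "Metric_space M d \<Longrightarrow> y \<in> Metric_space.mball M d x r \<longleftrightarrow> x \<in> M \<and> y \<in> M \<and> d x y < r"
  by (rule Metric_space.in_mball)

context ulim begin

interpretation MX: Metric_space X d by (rule MX)

definition good :: "nat \<Rightarrow> real \<Rightarrow> real \<Rightarrow> bool" where
  "good m r \<epsilon> \<longleftrightarrow> (\<exists>g. (\<forall>x \<in> Metric_space.mball X (\<lambda>x y. d x y / lam m) (q m) r. g x \<in> Z) \<and>
             g (q m) = z0 \<and>
             (\<exists>\<delta><\<epsilon>. \<forall>x \<in> Metric_space.mball X (\<lambda>x y. d x y / lam m) (q m) r.
                        \<forall>y \<in> Metric_space.mball X (\<lambda>x y. d x y / lam m) (q m) r.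
                          \<bar>d x y / lam m - D (g x) (g y)\<bar> \<le> \<delta>) \<and>
             Metric_space.mball Z D z0 (r - \<epsilon>) \<subseteq>
               {w \<in> Z. \<exists>x \<in> Metric_space.mball X (\<lambda>x y. d x y / lam m) (q m) r. D w (g x) < \<epsilon>})"

lemma dlm_nonneg: "0 \<le> d x y / lam m"
  using lam_pos[of m] MX.nonneg[of x y] by simp

lemma dlm_tri: "x \<in> X \<Longrightarrow> y \<in> X \<Longrightarrow> z \<in> X \<Longrightarrow> d x z / lam m \<le> d x y / lam m + d y z / lam m"
proof -
  assume a: "x \<in> X" "y \<in> X" "z \<in> X"
  have "d x z / lam m \<le> (d x y + d y z) / lam m"
    using lam_pos[of m] MX.triangle[OF a] by (intro divide_right_mono) auto
  then show ?thesis by (simp add: add_divide_distrib)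
qed

lemma dlm_commute: "d x y / lam m = d y x / lam m"
  by (simp add: MX.commute)

lemma MXl: "Metric_space X (\<lambda>x y. d x y / lam m)"
proof
  show "0 \<le> d x y / lam m" for x y by (rule dlm_nonneg)
  show "d x y / lam m = d y x / lam m" for x y by (rule dlm_commute)
  show "x \<in> X \<Longrightarrow> y \<in> X \<Longrightarrow> (d x y / lam m = 0) = (x = y)" for x y
    using lam_pos[of m] MX.zero by simp
  show "x \<in> X \<Longrightarrow> y \<in> X \<Longrightarrow> z \<in> X \<Longrightarrow> d x z / lam m \<le> d x y / lam m + d y z / lam m" for x y z
    by (rule dlm_tri)
qed

lemma in_B: "x \<in> Metric_space.mball X (\<lambda>x y. d x y / lam m) c r \<longleftrightarrow> c \<in> X \<and> x \<in> X \<and> d c x / lam m < r"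
  by (rule in_mb[OF MXl])

lemma in_BZ: "w \<in> Metric_space.mball Z D c r \<longleftrightarrow> c \<in> Z \<and> w \<in> Z \<and> D c w < r"
  by (rule in_mb[OF MZ])

lemma good_mono:
  assumes g: "good m r' \<epsilon>'" and r: "0 < r" "r \<le> r'" and e: "2 * \<epsilon>' \<le> \<epsilon>" "0 < \<epsilon>'"
  shows "good m r \<epsilon>"
proof -
  let ?B = "\<lambda>r. Metric_space.mball X (\<lambda>x y. d x y / lam m) (q m) r"
  obtain f \<delta> where f1: "\<forall>x \<in> ?B r'. f x \<in> Z" and f2: "f (q m) = z0" and f3: "\<delta> < \<epsilon>'"
    and f4: "\<forall>x \<in> ?B r'. \<forall>y \<in> ?B r'. \<bar>d x y / lam m - D (f x) (f y)\<bar> \<le> \<delta>"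
    and f5: "Metric_space.mball Z D z0 (r' - \<epsilon>') \<subseteq> {w \<in> Z. \<exists>x \<in> ?B r'. D w (f x) < \<epsilon>'}"
    using g unfolding good_def by (elim exE conjE)
  have sub: "?B r \<subseteq> ?B r'" using r(2) by (auto simp: in_B in_BZ)
  have qB: "q m \<in> ?B r'" using qX[of m] r MX.zero[of "q m" "q m"] by (simp add: in_B)
  show ?thesis unfolding good_def
  proof (intro exI[of _ f] conjI)
    show "\<forall>x \<in> ?B r. f x \<in> Z" using f1 sub by blast
    show "f (q m) = z0" by (rule f2)
    show "\<exists>\<delta><\<epsilon>. \<forall>x \<in> ?B r. \<forall>y \<in> ?B r. \<bar>d x y / lam m - D (f x) (f y)\<bar> \<le> \<delta>"
      using f3 f4 sub e by (intro exI[of _ \<delta>]) auto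
    show "Metric_space.mball Z D z0 (r - \<epsilon>) \<subseteq> {w \<in> Z. \<exists>x \<in> ?B r. D w (f x) < \<epsilon>}"
    proof
      fix w assume w: "w \<in> Metric_space.mball Z D z0 (r - \<epsilon>)"
      then have wZ: "w \<in> Z" and wd: "D z0 w < r - \<epsilon>" by (auto simp: in_B in_BZ)
      then have "w \<in> Metric_space.mball Z D z0 (r' - \<epsilon>')" using r e z0Z by (auto simp: in_B in_BZ)
      then obtain x where x: "x \<in> ?B r'" "D w (f x) < \<epsilon>'" using f5 by blast
      have fxZ: "f x \<in> Z" using f1 x(1) by blast
      have "\<bar>d (q m) x / lam m - D (f (q m)) (f x)\<bar> \<le> \<delta>" using f4 qB x(1) by blast
      then have "d (q m) x / lam m \<le> D z0 (f x) + \<delta>" using f2 by simp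
      moreover have "D z0 (f x) \<le> D z0 w + D w (f x)" using D_triangle z0Z wZ fxZ Z_S by blast
      ultimately have "d (q m) x / lam m < r" using wd x(2) f3 e by linarith
      then have "x \<in> ?B r" using x(1) by (auto simp: in_B in_BZ)
      then show "w \<in> {w \<in> Z. \<exists>x \<in> ?B r. D w (f x) < \<epsilon>}" using wZ x(2) e by force
    qed
  qed
qed

end

context ulim begin

interpretation MX: Metric_space X d by (rule MX)

lemma dn_eq: "dn v w m = d (v m) (w m) / lam m" by (simp add: dn_def)

lemma good_ev:
  assumes dbl: "doubling_mspace X d" and r: "r > 0" and e: "\<epsilon> > 0"
  shows "eventually (\<lambda>m. good m r \<epsilon>) U"
proof -
  define e4 where "e4 = \<epsilon>/4"
  have e4: "e4 > 0" using e unfolding e4_def by simp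
  obtain N where N: "finite N" "N \<subseteq> Z" and Ncov: "\<forall>a\<in>Z. D z0 a < r + 1 \<longrightarrow> (\<exists>b\<in>N. D a b < e4)"
    using Z_tb[OF dbl e4, where R="r+1"] by (elim exE conjE)
  define N' where "N' = insert z0 N"
  have N': "finite N'" "N' \<subseteq> Z" "z0 \<in> N'" "N \<subseteq> N'" unfolding N'_def using N z0Z by auto
  have N'S: "a \<in> S" if "a \<in> N'" for a using N'(2) that Z_S by blast
  have E1: "eventually (\<lambda>m. \<forall>a\<in>N'. \<forall>b\<in>N'. \<bar>dn a b m - D a b\<bar> < e4) U"
  proof (rule eventually_ball_finite[OF N'(1)], rule ballI, rule eventually_ball_finite[OF N'(1)], rule ballI)
    fix a b assume ab: "a \<in> N'" "b \<in> N'"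
    have "eventually (\<lambda>m. dist (dn a b m) (D a b) < e4) U"
      by (rule tendstoD[OF D_lim[OF N'S[OF ab(1)] N'S[OF ab(2)]] e4])
    then show "eventually (\<lambda>m. \<bar>dn a b m - D a b\<bar> < e4) U" by (simp add: dist_real_def)
  qed
  have "D z0 q = 0" using D_z0[OF q_S] D_self[OF q_S] by simp
  then have E2: "eventually (\<lambda>m. dn z0 q m < e4) U"
    using D_lt_ev[OF N'S[OF N'(3)] q_S] e4 by simp
  have E3: "eventually (\<lambda>m. \<forall>x\<in>X. d (q m) x / lam m < r \<longrightarrow> (\<exists>b\<in>N'. d x (b m) / lam m < e4)) U"
  proof (rule ccontr)
    let ?P = "\<lambda>m x. x \<in> X \<and> d (q m) x / lam m < r \<and> (\<forall>b\<in>N'. e4 \<le> d x (b m) / lam m)"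
    assume "\<not> ?thesis"
    then have nE: "eventually (\<lambda>m. \<not> (\<forall>x\<in>X. d (q m) x / lam m < r \<longrightarrow> (\<exists>b\<in>N'. d x (b m) / lam m < e4))) U"
      using Ult by blast
    have nE2: "eventually (\<lambda>m. \<exists>x. ?P m x) U"
      using nE by (rule eventually_mono) (auto simp: not_less)
    define v where "v m = (if \<exists>x. ?P m x then SOME x. ?P m x else q m)" for m
    have vP: "?P m (v m)" if "\<exists>x. ?P m x" for m
      unfolding v_def using that someI_ex[OF that] by simp
    have v: "v m \<in> X \<and> d (q m) (v m) / lam m < r" for m
    proof (cases "\<exists>x. ?P m x")
      case True then show ?thesis using vP by blast
    next
      case False
      have "v m = q m" unfolding v_def using False by (rule if_not_P)
      then show ?thesis using qX[of m] r MX.zero[of "q m" "q m"] by simp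
    qed
    have vq: "dn v q m \<le> r" for m using v[of m] MX.commute[of "v m" "q m"] unfolding dn_eq by simp
    have vS: "v \<in> S" unfolding S_def using v vq by blast
    have vbad: "eventually (\<lambda>m. \<forall>b\<in>N'. e4 \<le> dn v b m) U"
      using nE2 by (rule eventually_mono) (use vP in \<open>auto simp: dn_eq\<close>)
    define a where "a = rep v"
    have aZ: "a \<in> Z" unfolding a_def Z_def using vS by blast
    have "D z0 a = D q a" using D_z0 aZ Z_S by blast
    also have "\<dots> = D a q" by (rule D_commute)
    also have "\<dots> = D v q" unfolding a_def by (rule D_rep1[OF vS q_S])
    also have "\<dots> \<le> r" by (rule D_le[OF vS q_S]) (use vq in auto)
    finally have "D z0 a < r + 1" by simp
    then obtain b where b: "b \<in> N" "D a b < e4" using Ncov aZ by blast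
    have bS: "b \<in> S" using b(1) N(2) Z_S by blast
    have "D v b < e4" using b(2) D_rep1[OF vS bS] unfolding a_def by simp
    then have "eventually (\<lambda>m. dn v b m < e4) U" by (rule D_lt_ev[OF vS bS])
    moreover have "eventually (\<lambda>m. e4 \<le> dn v b m) U"
      using vbad by (rule eventually_mono) (use b(1) N'(4) in blast)
    ultimately have "eventually (\<lambda>m. False) U" by (rule eventually_elim2) simp
    then show False using Unb by (simp add: eventually_False)
  qed
  show ?thesis
    using eventually_conj[OF E1 eventually_conj[OF E2 E3]]
  proof (rule eventually_mono)
    fix m assume H: "(\<forall>a\<in>N'. \<forall>b\<in>N'. \<bar>dn a b m - D a b\<bar> < e4) \<and> dn z0 q m < e4 \<and>
                  (\<forall>x\<in>X. d (q m) x / lam m < r \<longrightarrow> (\<exists>b\<in>N'. d x (b m) / lam m < e4))"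
    have H1: "\<And>a b. a \<in> N' \<Longrightarrow> b \<in> N' \<Longrightarrow> \<bar>dn a b m - D a b\<bar> < e4" using H by blast
    have H2: "dn z0 q m < e4" using H by blast
    have H3: "\<And>x. x \<in> X \<Longrightarrow> d (q m) x / lam m < r \<Longrightarrow> \<exists>b\<in>N'. d x (b m) / lam m < e4" using H by blast
    let ?B = "Metric_space.mball X (\<lambda>x y. d x y / lam m) (q m) r"
    define g where "g x = (if x = q m then z0 else SOME b. b \<in> N' \<and> d x (b m) / lam m < e4)" for x
    have gp: "g x \<in> N' \<and> d x ((g x) m) / lam m < e4" if "x \<in> ?B" for x
    proof (cases "x = q m")
      case True
      have "d (q m) (z0 m) / lam m = dn z0 q m" unfolding dn_eq using MX.commute by simp
      then show ?thesis using True H2 N'(3) unfolding g_def by simp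
    next
      case False
      have "x \<in> X" "d (q m) x / lam m < r" using that by (auto simp: in_B)
      then have "\<exists>b. b \<in> N' \<and> d x (b m) / lam m < e4" using H3 by blast
      then have "(SOME b. b \<in> N' \<and> d x (b m) / lam m < e4) \<in> N' \<and>
        d x ((SOME b. b \<in> N' \<and> d x (b m) / lam m < e4) m) / lam m < e4" by (rule someI_ex)
      moreover have "g x = (SOME b. b \<in> N' \<and> d x (b m) / lam m < e4)" unfolding g_def using False by (rule if_not_P)
      ultimately show ?thesis by simp
    qed
    have BX: "x \<in> X" if "x \<in> ?B" for x using that by (auto simp: in_B)
    have gmX: "(g x) m \<in> X" if "x \<in> ?B" for x using gp[OF that] N'S S_X by blast
    show "good m r \<epsilon>" unfolding good_def
    proof (intro exI[of _ g] conjI)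
      show "\<forall>x\<in>?B. g x \<in> Z" using gp N'(2) by blast
      show "g (q m) = z0" unfolding g_def by simp
      show "\<exists>\<delta><\<epsilon>. \<forall>x\<in>?B. \<forall>y\<in>?B. \<bar>d x y / lam m - D (g x) (g y)\<bar> \<le> \<delta>"
      proof (intro exI[of _ "3 * e4"] conjI ballI)
        show "3 * e4 < \<epsilon>" using e unfolding e4_def by simp
        fix x y assume x: "x \<in> ?B" and y: "y \<in> ?B"
        define a where "a = g x"
        define b where "b = g y"
        have aN: "a \<in> N'" and xa: "d x (a m) / lam m < e4" using gp[OF x] unfolding a_def by auto
        have bN: "b \<in> N'" and yb: "d y (b m) / lam m < e4" using gp[OF y] unfolding b_def by auto
        have X4: "x \<in> X" "y \<in> X" "a m \<in> X" "b m \<in> X"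
          using BX[OF x] BX[OF y] gmX[OF x] gmX[OF y] unfolding a_def b_def by auto
        have t1: "d x y / lam m \<le> d x (a m) / lam m + d (a m) (b m) / lam m + d (b m) y / lam m"
          using dlm_tri[OF X4(1) X4(3) X4(2), of m] dlm_tri[OF X4(3) X4(4) X4(2), of m] by linarith
        have t2: "d (a m) (b m) / lam m \<le> d (a m) x / lam m + d x y / lam m + d y (b m) / lam m"
          using dlm_tri[OF X4(3) X4(1) X4(4), of m] dlm_tri[OF X4(1) X4(2) X4(4), of m] by linarith
        have c1: "d (a m) x / lam m = d x (a m) / lam m" "d (b m) y / lam m = d y (b m) / lam m"
          by (rule dlm_commute)+
        have "\<bar>dn a b m - D a b\<bar> < e4" by (rule H1[OF aN bN])
        then show "\<bar>d x y / lam m - D (g x) (g y)\<bar> \<le> 3 * e4"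
          using t1 t2 c1 xa yb unfolding a_def[symmetric] b_def[symmetric] dn_eq by linarith
      qed
      show "Metric_space.mball Z D z0 (r - \<epsilon>) \<subseteq> {w \<in> Z. \<exists>x\<in>?B. D w (g x) < \<epsilon>}"
      proof
        fix w assume "w \<in> Metric_space.mball Z D z0 (r - \<epsilon>)"
        then have wZ: "w \<in> Z" and wd: "D z0 w < r - \<epsilon>" by (auto simp: in_BZ)
        then have "D z0 w < r + 1" using e by simp
        then obtain b where bN0: "b \<in> N" and wb: "D w b < e4" using Ncov wZ by blast
        have bN: "b \<in> N'" using bN0 N'(4) by blast
        have bS: "b \<in> S" by (rule N'S[OF bN])
        have bZ: "b \<in> Z" using bN N'(2) by blast
        define x where "x = b m"
        have xX: "x \<in> X" unfolding x_def using S_X[OF bS] .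
        have "dn q b m \<le> dn q z0 m + dn z0 b m"
          by (rule dn_triangle) (use qX S_X N'S N'(3) bS in auto)
        moreover have "dn q z0 m = dn z0 q m" by (simp add: dn_commute)
        moreover have "dn z0 b m < D z0 b + e4" using H1[OF N'(3) bN] by linarith
        moreover have "D z0 b \<le> D z0 w + D w b" using D_triangle z0Z wZ bZ Z_S by blast
        ultimately have "dn q b m < r" using H2 wd wb e unfolding e4_def by linarith
        then have xB: "x \<in> ?B" unfolding x_def using qX[of m] S_X[OF bS] by (simp add: in_B dn_eq)
        define a where "a = g x"
        have aN: "a \<in> N'" and xa: "d x (a m) / lam m < e4" using gp[OF xB] unfolding a_def by auto
        have aZ: "a \<in> Z" using aN N'(2) by blast
        have "D b a < dn b a m + e4" using H1[OF bN aN] by linarith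
        moreover have "dn b a m = d x (a m) / lam m" unfolding x_def dn_eq by simp
        moreover have "D w a \<le> D w b + D b a" using D_triangle wZ bZ aZ Z_S by blast
        ultimately have "D w a < \<epsilon>" using xa wb e unfolding e4_def by linarith
        then show "w \<in> {w \<in> Z. \<exists>x\<in>?B. D w (g x) < \<epsilon>}" using wZ xB unfolding a_def by blast
      qed
    qed
  qed
qed

end

context ulim begin

lemma pGH_sub:
  assumes dbl: "doubling_mspace X d"
  shows "\<exists>\<sigma>. (\<forall>k. k \<le> \<sigma> k) \<and> pGH_converges (\<lambda>n. X) (\<lambda>n. q (\<sigma> n)) (\<lambda>n x y. d x y / lam (\<sigma> n)) Z z0 D"
proof -
  have "\<forall>k. \<exists>m. k \<le> m \<and> (\<forall>j\<in>{..k}. good m (real j + 1) (1/(real j+1)))"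
  proof
    fix k
    have "eventually (\<lambda>m. \<forall>j\<in>{..k}. good m (real j + 1) (1/(real j+1))) U"
      by (intro eventually_ball_finite finite_atMost ballI good_ev[OF dbl]) auto
    then have "eventually (\<lambda>m. k \<le> m \<and> (\<forall>j\<in>{..k}. good m (real j + 1) (1/(real j+1)))) U"
      using ev_ge[of k] by (rule eventually_elim2) simp
    then show "\<exists>m. k \<le> m \<and> (\<forall>j\<in>{..k}. good m (real j + 1) (1/(real j+1)))"
      by (rule eventually_happens'[OF Unb])
  qed
  then obtain \<sigma> where \<sigma>: "\<forall>k. k \<le> \<sigma> k \<and> (\<forall>j\<in>{..k}. good (\<sigma> k) (real j + 1) (1/(real j+1)))"
    by (rule choice[THEN exE])
  have \<sigma>1: "\<And>k. k \<le> \<sigma> k" using \<sigma> by blast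
  have \<sigma>2: "\<And>j k. j \<le> k \<Longrightarrow> good (\<sigma> k) (real j + 1) (1/(real j+1))" using \<sigma> by blast
  have conv: "\<exists>n0. \<forall>n>n0. good (\<sigma> n) r \<epsilon>" if r: "r > 0" and e: "\<epsilon> > 0" for r \<epsilon>
  proof -
    obtain j1 :: nat where j1: "r \<le> real j1" using real_arch_simple by blast
    obtain j2 :: nat where j2: "2 / \<epsilon> \<le> real j2" using real_arch_simple by blast
    define j where "j = max j1 j2"
    have jr: "r \<le> real j + 1" using j1 unfolding j_def by linarith
    have "2 / \<epsilon> < real j + 1" using j2 unfolding j_def by linarith
    then have "2 < (real j + 1) * \<epsilon>" using e by (simp add: divide_less_eq)
    then have je: "2 * (1 / (real j + 1)) \<le> \<epsilon>" by (simp add: divide_le_eq mult.commute)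
    have "good (\<sigma> n) r \<epsilon>" if "j < n" for n
      by (rule good_mono[OF \<sigma>2[of j n] r jr je]) (use that in auto)
    then show ?thesis by blast
  qed
  have "pGH_converges (\<lambda>n. X) (\<lambda>n. q (\<sigma> n)) (\<lambda>n x y. d x y / lam (\<sigma> n)) Z z0 D"
    unfolding pGH_converges_def good_def[symmetric]
    using MZ mcomplete_Z z0Z conv by blast
  then show ?thesis using \<sigma>1 by blast
qed

lemma Z_countable_inj:
  assumes dbl: "doubling_mspace X d"
  shows "\<exists>\<iota>::(nat \<Rightarrow> 'a) \<Rightarrow> real. inj_on \<iota> Z"
proof -
  have "\<forall>kj. \<exists>N. finite N \<and> N \<subseteq> Z \<and> (\<forall>a\<in>Z. D z0 a < real (fst kj) \<longrightarrow> (\<exists>b\<in>N. D a b < 1/(real (snd kj)+1)))"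
  proof
    fix kj :: "nat \<times> nat"
    have "(0::real) < 1/(real (snd kj)+1)" by simp
    then show "\<exists>N. finite N \<and> N \<subseteq> Z \<and> (\<forall>a\<in>Z. D z0 a < real (fst kj) \<longrightarrow> (\<exists>b\<in>N. D a b < 1/(real (snd kj)+1)))"
      by (rule Z_tb[OF dbl])
  qed
  then obtain NN where NN: "\<forall>kj. finite (NN kj) \<and> NN kj \<subseteq> Z \<and> (\<forall>a\<in>Z. D z0 a < real (fst kj) \<longrightarrow> (\<exists>b\<in>NN kj. D a b < 1/(real (snd kj)+1)))"
    by (rule choice[THEN exE])
  define Dn where "Dn = (\<Union>kj. NN kj)"
  have cD: "countable Dn" unfolding Dn_def using NN by (intro countable_UN) (auto intro: countable_finite)
  define A where "A = Dn \<times> (UNIV :: nat set)"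
  have cA: "countable A" unfolding A_def using cD by simp
  obtain \<kappa> :: "((nat \<Rightarrow> 'a) \<times> nat) set \<Rightarrow> real" where \<kappa>: "inj_on \<kappa> (Pow A)"
    using countable_pow_inj_real[OF cA] by blast
  define \<iota>s where "\<iota>s a = {bj \<in> A. D a (fst bj) < 1/(real (snd bj)+1)}" for a
  have "inj_on \<iota>s Z"
  proof (rule inj_onI)
    fix a a' assume a: "a \<in> Z" "a' \<in> Z" "\<iota>s a = \<iota>s a'"
    show "a = a'"
    proof (rule ccontr)
      assume "a \<noteq> a'"
      then have pos: "D a a' > 0" using Metric_space.zero[OF MZ a(1,2)] D_nonneg[of a a'] by simp
      obtain j :: nat where j: "1/(real j+1) < D a a' / 2" using small_inv[of "D a a' / 2"] pos by auto
      obtain k :: nat where k: "D z0 a < real k" using reals_Archimedean2 by blast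
      obtain b where b: "b \<in> NN (k, j)" "D a b < 1/(real j+1)" using NN a(1) k by fastforce
      have bD: "b \<in> Dn" unfolding Dn_def using b(1) by blast
      have "(b, j) \<in> \<iota>s a" unfolding \<iota>s_def A_def using bD b(2) by simp
      then have "(b, j) \<in> \<iota>s a'" using a(3) by simp
      then have "D a' b < 1/(real j+1)" unfolding \<iota>s_def by simp
      moreover have bZ: "b \<in> Z" using b(1) NN by blast
      moreover have "D a a' \<le> D a b + D b a'" using D_triangle a(1,2) bZ Z_S by blast
      moreover have "D b a' = D a' b" by (rule D_commute)
      ultimately show False using b(2) j by linarith
    qed
  qed
  moreover have "\<iota>s ` Z \<subseteq> Pow A" unfolding \<iota>s_def by blast
  ultimately have "inj_on (\<kappa> \<circ> \<iota>s) Z" using \<kappa> by (simp add: comp_inj_on inj_on_subset)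
  then show ?thesis by blast
qed

end

lemma lim_sub: assumes "f \<longlonglongrightarrow> L" "\<And>n. n \<le> \<sigma> n" shows "(\<lambda>n. f (\<sigma> n)) \<longlonglongrightarrow> L"
proof -
  have "filterlim \<sigma> sequentially sequentially"
    using filterlim_at_top_mono[OF filterlim_ident, of \<sigma>] assms(2) by (simp add: always_eventually)
  then show ?thesis by (rule filterlim_compose[OF assms(1)])
qed

context ulim begin

lemma final_from_ulim:
  assumes dbl: "doubling_mspace X d" and lam0: "lam \<longlonglongrightarrow> 0" and qp: "(\<lambda>n. d (q n) p) \<longlonglongrightarrow> 0"
    and FZ: "\<And>x. x \<in> X \<Longrightarrow> F x \<in> Z" and Finj: "inj_on F X"
    and c1: "\<And>x \<epsilon>. x\<in>X \<Longrightarrow> \<epsilon>>0 \<Longrightarrow> \<exists>\<delta>>0. \<forall>y\<in>X. d x y < \<delta> \<longrightarrow> D (F x) (F y) < \<epsilon>"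
    and c2: "\<And>x \<epsilon>. x\<in>X \<Longrightarrow> \<epsilon>>0 \<Longrightarrow> \<exists>\<delta>>0. \<forall>y\<in>X. D (F x) (F y) < \<delta> \<longrightarrow> d x y < \<epsilon>"
    and qs: "\<And>x y z. x\<in>X \<Longrightarrow> y\<in>X \<Longrightarrow> z\<in>X \<Longrightarrow> x \<noteq> z \<Longrightarrow> D (F x) (F y) / D (F x) (F z) \<le> e (d x y / d x z)"
  shows "\<exists>(T::real set) t dT f. (T, t, dT) \<in> weak_tangents X d p \<and> qs_embedding X d T dT e f"
proof -
  obtain \<sigma> where \<sigma>1: "\<forall>k. k \<le> \<sigma> k" and pg: "pGH_converges (\<lambda>n. X) (\<lambda>n. q (\<sigma> n)) (\<lambda>n x y. d x y / lam (\<sigma> n)) Z z0 D"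
    using pGH_sub[OF dbl] by (elim exE conjE)
  obtain \<iota> :: "(nat \<Rightarrow> 'a) \<Rightarrow> real" where \<iota>: "inj_on \<iota> Z" using Z_countable_inj[OF dbl] by (elim exE)
  define dT where "dT = (\<lambda>a b. D (inv_into Z \<iota> a) (inv_into Z \<iota> b))"
  note tr = transfer_iso[OF MZ \<iota>, folded dT_def]
  have pg2: "pGH_converges (\<lambda>n. X) (\<lambda>n. q (\<sigma> n)) (\<lambda>n x y. d x y / lam (\<sigma> n)) (\<iota>`Z) (\<iota> z0) dT"
    unfolding dT_def by (rule pGH_transfer[OF pg \<iota>])
  have wt: "(\<iota>`Z, \<iota> z0, dT) \<in> weak_tangents X d p"
    unfolding weak_tangents_def
  proof (intro CollectI case_prodI exI[of _ "\<lambda>n. lam (\<sigma> n)"] exI[of _ "\<lambda>n. q (\<sigma> n)"] conjI allI)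
    show "0 < lam (\<sigma> n)" for n by (rule lam_pos)
    show "(\<lambda>n. lam (\<sigma> n)) \<longlonglongrightarrow> 0" using lim_sub[OF lam0] \<sigma>1 by blast
    show "q (\<sigma> n) \<in> X" for n by (rule qX)
    show "(\<lambda>n. d (q (\<sigma> n)) p) \<longlonglongrightarrow> 0" using lim_sub[OF qp] \<sigma>1 by blast
    show "pGH_converges (\<lambda>n. X) (\<lambda>n. q (\<sigma> n)) (\<lambda>n x y. d x y / lam (\<sigma> n)) (\<iota>`Z) (\<iota> z0) dT" by (rule pg2)
  qed
  define f where "f = \<iota> \<circ> F"
  have dTf: "dT (f x) (f y) = D (F x) (F y)" if "x \<in> X" "y \<in> X" for x y
    unfolding f_def using tr(3)[OF FZ[OF that(1)] FZ[OF that(2)]] by (simp add: dT_def)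
  have fX: "f ` X \<subseteq> \<iota>`Z" unfolding f_def using FZ by auto
  have Mf: "Metric_space (f`X) dT" using Metric_space.subspace[OF tr(1) fX] .
  have finj: "inj_on f X" unfolding f_def using Finj \<iota> FZ
    by (metis (no_types, lifting) comp_inj_on image_subset_iff inj_on_subset)
  have hm: "homeomorphic_map (Metric_space.mtopology X d) (Metric_space.mtopology (f`X) dT) f"
  proof (rule homeo_metric[OF MX Mf finj])
    fix x and \<epsilon>::real assume "x \<in> X" "\<epsilon> > 0"
    then show "\<exists>\<delta>>0. \<forall>y\<in>X. d x y < \<delta> \<longrightarrow> dT (f x) (f y) < \<epsilon>" using c1 dTf by simp
  next
    fix x and \<epsilon>::real assume "x \<in> X" "\<epsilon> > 0"
    then show "\<exists>\<delta>>0. \<forall>y\<in>X. dT (f x) (f y) < \<delta> \<longrightarrow> d x y < \<epsilon>" using c2 dTf by simp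
  qed
  have "qs_embedding X d (\<iota>`Z) dT e f"
    unfolding qs_embedding_def qs_homeo_def
    using fX hm qs dTf by simp
  then show ?thesis using wt by blast
qed

end

lemma eta_lemma:
  assumes H: "homeomorphism {0..} {0..} (\<eta>::real\<Rightarrow>real) g"
  shows "g 0 = 0" "\<And>s t. 0 \<le> s \<Longrightarrow> s < t \<Longrightarrow> g s < g t" "\<And>u. 0 \<le> u \<Longrightarrow> g (\<eta> u) = u"
    "\<And>u. 0 \<le> u \<Longrightarrow> \<eta> u \<ge> 0" "\<And>t. 0 \<le> t \<Longrightarrow> inv_into {0..} \<eta> t = g t"
    "\<And>t. 0 \<le> t \<Longrightarrow> g t \<ge> 0" "\<And>t. 0 \<le> t \<Longrightarrow> \<eta> (g t) = t"
proof -
  have h1: "\<forall>x\<in>{0..}. g (\<eta> x) = x" and h2: "\<eta> ` {0..} = {0..}" and h4: "\<forall>y\<in>{0..}. \<eta> (g y) = y"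
    and h5: "g ` {0..} = {0..}" and h6: "continuous_on {0..} g"
    using H unfolding homeomorphism_def by auto
  show gi: "\<And>u. 0 \<le> u \<Longrightarrow> g (\<eta> u) = u" using h1 by simp
  show ei: "\<And>t. 0 \<le> t \<Longrightarrow> \<eta> (g t) = t" using h4 by simp
  show en: "\<And>u. 0 \<le> u \<Longrightarrow> \<eta> u \<ge> 0" using h2 by auto
  show gn: "\<And>t. 0 \<le> t \<Longrightarrow> g t \<ge> 0" using h5 by auto
  have ginj: "inj_on g {0..}" by (rule inj_on_inverseI[of _ \<eta>]) (use h4 in auto)
  have einj: "inj_on \<eta> {0..}" by (rule inj_on_inverseI[of _ g]) (use h1 in auto)
  show "\<And>t. 0 \<le> t \<Longrightarrow> inv_into {0..} \<eta> t = g t"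
  proof -
    fix t :: real assume t: "0 \<le> t"
    have "inv_into {0..} \<eta> (\<eta> (g t)) = g t" using einj gn[OF t] by (simp add: inv_into_f_f)
    then show "inv_into {0..} \<eta> t = g t" using ei[OF t] by simp
  qed
  have key: "(g 0 < g x \<and> g x < g B) \<or> (g B < g x \<and> g x < g 0)" if "0 < x" "x < B" for x B
  proof (rule continuous_inj_imp_mono[OF that])
    show "continuous_on {0..B} g" using h6 by (rule continuous_on_subset) auto
    show "inj_on g {0..B}" using ginj by (rule inj_on_subset) auto
  qed
  have g0n: "g 0 \<ge> 0" using gn by simp
  have "g 0 + 1 \<in> g ` {0..}" using h5 g0n by simp
  then obtain y where y: "y \<ge> 0" "g y = g 0 + 1" by auto
  have ypos: "y > 0" using y by (cases "y = 0") auto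
  have up: "g 0 < g B" if "B > y" for B using key[OF ypos that] y by linarith
  have pos: "g 0 < g t" if "t > 0" for t
  proof -
    define B where "B = max t y + 1"
    have "t < B" "B > y" unfolding B_def by auto
    then show ?thesis using key[OF that \<open>t < B\<close>] up[of B] by linarith
  qed
  show "\<And>s t. 0 \<le> s \<Longrightarrow> s < t \<Longrightarrow> g s < g t"
  proof -
    fix s t :: real assume st: "0 \<le> s" "s < t"
    show "g s < g t"
    proof (cases "s = 0")
      case True then show ?thesis using pos st by simp
    next
      case False
      then have "s > 0" using st by simp
      then show ?thesis using key[OF _ st(2)] pos[of t] st by fastforce
    qed
  qed
  have "0 \<in> g ` {0..}" using h5 by simp
  then obtain y0 where y0: "y0 \<ge> 0" "g y0 = 0" by auto
  show "g 0 = 0"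
  proof (cases "y0 = 0")
    case True then show ?thesis using y0 by simp
  next
    case False then have "y0 > 0" using y0 by simp
    then have "g 0 < g y0" by (rule pos)
    then show ?thesis using y0 g0n by simp
  qed
qed

locale etaloc =
  fixes \<eta> :: "real \<Rightarrow> real" and g :: "real \<Rightarrow> real"
  assumes H: "homeomorphism {0..} {0..} \<eta> g"
begin

definition etp where "etp s = 1 / inv_into {0..} \<eta> (1 / s)"

lemma g0: "g 0 = 0" using eta_lemma(1)[OF H] .
lemma gs: "0 \<le> s \<Longrightarrow> s < t \<Longrightarrow> g s < g t" using eta_lemma(2)[OF H] by blast
lemma gm: "0 \<le> s \<Longrightarrow> s \<le> t \<Longrightarrow> g s \<le> g t" using gs by (cases "s = t") (auto simp: less_le)
lemma ge: "0 \<le> u \<Longrightarrow> g (\<eta> u) = u" using eta_lemma(3)[OF H] by blast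
lemma en: "0 \<le> u \<Longrightarrow> \<eta> u \<ge> 0" using eta_lemma(4)[OF H] by blast
lemma invg: "0 \<le> t \<Longrightarrow> inv_into {0..} \<eta> t = g t" using eta_lemma(5)[OF H] by blast
lemma gpos: "0 < t \<Longrightarrow> 0 < g t" using gs[of 0 t] g0 by simp

lemma etp0: "etp 0 = 0" unfolding etp_def using invg[of 0] g0 by simp

lemma etp_eq: "0 < s \<Longrightarrow> etp s = 1 / g (1 / s)" unfolding etp_def using invg[of "1/s"] by simp

lemma etp_pos: "0 < s \<Longrightarrow> 0 < etp s" using etp_eq gpos[of "1/s"] by simp

lemma etp_nonneg: "0 \<le> s \<Longrightarrow> 0 \<le> etp s"
  using etp_pos etp0 by (cases "s = 0") (auto simp: less_le)

lemma etp_mono: assumes "0 < s" "s \<le> s'" shows "etp s \<le> etp s'"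
proof -
  have s': "0 < s'" using assms by simp
  have "1/s' \<le> 1/s" using assms by (simp add: frac_le)
  then have "g (1/s') \<le> g (1/s)" using s' by (intro gm) auto
  moreover have "0 < g (1/s')" using gpos s' by simp
  ultimately have "1 / g (1/s) \<le> 1 / g (1/s')" by (simp add: frac_le)
  then show ?thesis using etp_eq assms(1) s' by simp
qed

lemma etp_small: assumes e: "\<epsilon> > 0" shows "\<exists>\<delta>>0. \<forall>s. 0 \<le> s \<longrightarrow> s < \<delta> \<longrightarrow> etp s < \<epsilon>"
proof -
  define T where "T = \<eta> (1/\<epsilon>)"
  have T0: "T \<ge> 0" unfolding T_def using en e by simp
  have gT: "g T = 1/\<epsilon>" unfolding T_def using ge e by simp
  have "etp s < \<epsilon>" if s: "0 \<le> s" "s < 1/(T+1)" for s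
  proof (cases "s = 0")
    case True then show ?thesis using etp0 e by simp
  next
    case False
    then have sp: "s > 0" using s by simp
    have "T + 1 < 1/s" using s sp T0 by (simp add: field_simps)
    then have "T < 1/s" by simp
    then have "g T < g (1/s)" using gs T0 by blast
    then have "1/\<epsilon> < g (1/s)" using gT by simp
    moreover have "0 < g (1/s)" using gpos sp by simp
    ultimately have "1 / g (1/s) < \<epsilon>" using e by (simp add: divide_less_eq field_simps)
    then show ?thesis using etp_eq sp by simp
  qed
  moreover have "1/(T+1) > 0" using T0 by simp
  ultimately show ?thesis by blast
qed

lemma etp_key: assumes "0 < t" "0 < u" "t \<le> \<eta> u" shows "1 / u \<le> etp (1 / t)"
proof -
  have "g t \<le> g (\<eta> u)" using assms by (intro gm) auto
  then have "g t \<le> u" using ge assms by simp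
  moreover have "0 < g t" using gpos assms by simp
  ultimately have "1 / u \<le> 1 / g t" by (simp add: frac_le)
  then show ?thesis using etp_eq[of "1/t"] assms by simp
qed

end


context etaloc begin

lemma qs_inv:
  assumes MX: "Metric_space X d" and UX: "U \<subseteq> X" and fqs: "qs_homeo U d X d \<eta> f" and fU: "f ` U = X"
  shows "\<forall>x\<in>X. inv_into U f x \<in> U \<and> f (inv_into U f x) = x"
    and "\<forall>x\<in>X. \<forall>y\<in>X. \<forall>z\<in>X. x \<noteq> z \<longrightarrow>
           d (inv_into U f x) (inv_into U f y) / d (inv_into U f x) (inv_into U f z) \<le> etp (d x y / d x z)"
proof -
  interpret MX: Metric_space X d by (rule MX)
  have MU: "Metric_space U d" by (rule MX.subspace[OF UX])
  have hm: "homeomorphic_map (Metric_space.mtopology U d) (Metric_space.mtopology X d) f"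
    and fq: "\<forall>x\<in>U. \<forall>y\<in>U. \<forall>z\<in>U. x \<noteq> z \<longrightarrow> d (f x) (f y) / d (f x) (f z) \<le> \<eta> (d x y / d x z)"
    using fqs unfolding qs_homeo_def by auto
  have "inj_on f (topspace (Metric_space.mtopology U d))" by (rule homeomorphic_imp_injective_map[OF hm])
  then have finj: "inj_on f U" using Metric_space.topspace_mtopology[OF MU] by simp
  define h where "h = inv_into U f"
  have hU: "h x \<in> U" and fh: "f (h x) = x" if "x \<in> X" for x
    unfolding h_def using that fU by (auto intro: inv_into_into f_inv_into_f)
  show "\<forall>x\<in>X. inv_into U f x \<in> U \<and> f (inv_into U f x) = x" using hU fh unfolding h_def by blast
  have "d (h x) (h y) / d (h x) (h z) \<le> etp (d x y / d x z)"
    if xyz: "x \<in> X" "y \<in> X" "z \<in> X" "x \<noteq> z" for x y z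
  proof (cases "x = y")
    case True
    have "h x \<in> X" using hU[OF xyz(1)] UX by blast
    then have "d (h x) (h y) = 0" using True MX.zero by simp
    then show ?thesis using etp0 True xyz by simp
  next
    case False
    define a where "a = h x"
    define b where "b = h y"
    define c where "c = h z"
    have abc: "a \<in> U" "b \<in> U" "c \<in> U" unfolding a_def b_def c_def using hU xyz by auto
    have fabc: "f a = x" "f b = y" "f c = z" unfolding a_def b_def c_def using fh xyz by auto
    have ab: "a \<noteq> b" using fabc False by auto
    have ac: "a \<noteq> c" using fabc xyz(4) by auto
    have dab: "d a b > 0" and dac: "d a c > 0" using ab ac abc UX MX.zero MX.nonneg
      by (metis less_eq_real_def subsetD)+
    have dxy: "d x y > 0" and dxz: "d x z > 0" using False xyz MX.zero MX.nonneg
      by (metis less_eq_real_def)+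
    have "d (f a) (f c) / d (f a) (f b) \<le> \<eta> (d a c / d a b)" using fq abc ab by blast
    then have "d x z / d x y \<le> \<eta> (d a c / d a b)" using fabc by simp
    then have "1 / (d a c / d a b) \<le> etp (1 / (d x z / d x y))"
      by (intro etp_key) (use dab dac dxy dxz in auto)
    then show ?thesis unfolding a_def[symmetric] b_def[symmetric] c_def[symmetric] by simp
  qed
  then show "\<forall>x\<in>X. \<forall>y\<in>X. \<forall>z\<in>X. x \<noteq> z \<longrightarrow>
           d (inv_into U f x) (inv_into U f y) / d (inv_into U f x) (inv_into U f z) \<le> etp (d x y / d x z)"
    unfolding h_def by blast
qed

end

lemma div_le_aux: "0 < (a::real) \<Longrightarrow> 0 < b \<Longrightarrow> 0 < E \<Longrightarrow> a / b \<le> E \<Longrightarrow> a / E \<le> b"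
  by (simp add: divide_le_eq mult.commute)

context ulim begin

interpretation MX: Metric_space X d by (rule MX)

lemma embed_from_h:
  assumes x0: "x0 \<in> X" and x1: "x1 \<in> X" and x01: "x0 \<noteq> x1"
    and hX0: "\<forall>n. \<forall>x\<in>X. h n x \<in> X"
    and hinj0: "\<forall>n. \<forall>x\<in>X. \<forall>y\<in>X. h n x = h n y \<longrightarrow> x = y"
    and hqs0: "\<forall>n. \<forall>x\<in>X. \<forall>y\<in>X. \<forall>z\<in>X. x \<noteq> z \<longrightarrow>
                 d (h n x) (h n y) / d (h n x) (h n z) \<le> e (d x y / d x z)"
    and lamdef0: "\<forall>n. lam n = d (h n x0) (h n x1)" and qdef0: "\<forall>n. q n = h n x0"
    and epos0: "\<forall>s. 0 < s \<longrightarrow> 0 < e s" and emono0: "\<forall>s s'. 0 < s \<and> s \<le> s' \<longrightarrow> e s \<le> e s'"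
    and esmall0: "\<forall>\<epsilon>. \<epsilon> > 0 \<longrightarrow> (\<exists>\<delta>>0. \<forall>s. 0 \<le> s \<longrightarrow> s < \<delta> \<longrightarrow> e s < \<epsilon>)"
  shows "\<exists>F. (\<forall>x\<in>X. F x \<in> Z) \<and> inj_on F X \<and>
    (\<forall>x\<in>X. \<forall>\<epsilon>>0. \<exists>\<delta>>0. \<forall>y\<in>X. d x y < \<delta> \<longrightarrow> D (F x) (F y) < \<epsilon>) \<and>
    (\<forall>x\<in>X. \<forall>\<epsilon>>0. \<exists>\<delta>>0. \<forall>y\<in>X. D (F x) (F y) < \<delta> \<longrightarrow> d x y < \<epsilon>) \<and>
    (\<forall>x\<in>X. \<forall>y\<in>X. \<forall>z\<in>X. x \<noteq> z \<longrightarrow> D (F x) (F y) / D (F x) (F z) \<le> e (d x y / d x z))"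
proof -
  have hX: "\<And>n x. x \<in> X \<Longrightarrow> h n x \<in> X" using hX0 by blast
  have hinj: "\<And>n x y. x \<in> X \<Longrightarrow> y \<in> X \<Longrightarrow> h n x = h n y \<Longrightarrow> x = y" using hinj0 by blast
  have hqs: "\<And>n x y z. x \<in> X \<Longrightarrow> y \<in> X \<Longrightarrow> z \<in> X \<Longrightarrow> x \<noteq> z \<Longrightarrow>
                 d (h n x) (h n y) / d (h n x) (h n z) \<le> e (d x y / d x z)" using hqs0 by blast
  have lamdef: "\<And>n. lam n = d (h n x0) (h n x1)" using lamdef0 by blast
  have qdef: "\<And>n. q n = h n x0" using qdef0 by blast
  have epos: "\<And>s. 0 < s \<Longrightarrow> 0 < e s" using epos0 by blast
  have emono: "\<And>s s'. 0 < s \<Longrightarrow> s \<le> s' \<Longrightarrow> e s \<le> e s'" using emono0 by blast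
  have esmall: "\<And>\<epsilon>. \<epsilon> > 0 \<Longrightarrow> \<exists>\<delta>>0. \<forall>s. 0 \<le> s \<longrightarrow> s < \<delta> \<longrightarrow> e s < \<epsilon>" using esmall0 by blast
  have dpos: "0 < d a b" if "a \<in> X" "b \<in> X" "a \<noteq> b" for a b
    using that MX.zero[of a b] MX.nonneg[of a b] by linarith
  have hdpos: "0 < d (h n a) (h n b)" if "a \<in> X" "b \<in> X" "a \<noteq> b" for n a b
    using dpos[OF hX[OF that(1)] hX[OF that(2)]] hinj[OF that(1,2)] that(3) by blast
  define hs where "hs x = (\<lambda>n. h n x)" for x
  have dn_hs: "dn (hs x) (hs y) n = d (h n x) (h n y) / lam n" for x y n by (simp add: dn_def hs_def)
  have hsS: "hs x \<in> S" if x: "x \<in> X" for x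
    unfolding S_def
  proof (intro CollectI conjI allI exI)
    show "hs x n \<in> X" for n unfolding hs_def using hX[OF x] .
    fix n
    have "dn (hs x) q n = d (h n x0) (h n x) / d (h n x0) (h n x1)"
      using MX.commute lamdef qdef unfolding dn_def hs_def by simp
    also have "\<dots> \<le> e (d x0 x / d x0 x1)" by (rule hqs[OF x0 x x1 x01])
    finally show "dn (hs x) q n \<le> e (d x0 x / d x0 x1)" .
  qed
  have lowerA: "\<exists>w\<in>X. w \<noteq> x \<and> (\<exists>c>0. \<forall>n. c \<le> dn (hs x) (hs w) n)" if x: "x \<in> X" for x
  proof (cases "x = x0")
    case True
    have "dn (hs x) (hs x1) n = 1" for n
      unfolding dn_hs True lamdef using lam_pos[of n] lamdef[of n] by simp
    then show ?thesis using x1 x01 True by (intro bexI[of _ x1] conjI exI[of _ 1]) auto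
  next
    case False
    define E where "E = e (d x0 x1 / d x0 x)"
    have Epos: "E > 0" unfolding E_def using dpos[OF x0 x1 x01] dpos[OF x0 x] False
      by (intro epos) simp
    have "1 / E \<le> dn (hs x) (hs x0) n" for n
    proof -
      have "d (h n x0) (h n x1) / d (h n x0) (h n x) \<le> E" unfolding E_def
        using hqs[OF x0 x1 x] False by simp
      then have "d (h n x0) (h n x1) / E \<le> d (h n x0) (h n x)"
        using div_le_aux hdpos[OF x0 x1 x01] hdpos[OF x0 x] False Epos by metis
      then have "lam n / E \<le> d (h n x) (h n x0)" using lamdef MX.commute by simp
      then have "lam n / E / lam n \<le> d (h n x) (h n x0) / lam n"
        using lam_pos[of n] by (intro divide_right_mono) auto
      then show ?thesis unfolding dn_hs using lam_pos[of n] by simp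
    qed
    moreover have "1 / E > 0" using Epos by simp
    ultimately show ?thesis using x0 False by (intro bexI[of _ x0] conjI exI[of _ "1/E"]) auto
  qed
  have lowerB: "\<exists>c>0. \<forall>n. c \<le> dn (hs x) (hs y) n" if xy: "x \<in> X" "y \<in> X" "x \<noteq> y" for x y
  proof -
    obtain w c where w: "w \<in> X" "w \<noteq> x" and c: "c > 0" "\<And>n. c \<le> dn (hs x) (hs w) n"
      using lowerA[OF xy(1)] by blast
    define E where "E = e (d x w / d x y)"
    have Epos: "E > 0" unfolding E_def using dpos[OF xy(1) w(1)] dpos[OF xy] w(2)
      by (intro epos) simp
    have "c / E \<le> dn (hs x) (hs y) n" for n
    proof -
      have "d (h n x) (h n w) / d (h n x) (h n y) \<le> E" unfolding E_def
        using hqs[OF xy(1) w(1) xy(2) xy(3)] .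
      then have "d (h n x) (h n w) / E \<le> d (h n x) (h n y)"
        using div_le_aux hdpos[OF xy(1) w(1)] hdpos[OF xy] w(2) Epos by metis
      then have "d (h n x) (h n w) / E / lam n \<le> d (h n x) (h n y) / lam n"
        using lam_pos[of n] by (intro divide_right_mono) auto
      then have "dn (hs x) (hs w) n / E \<le> dn (hs x) (hs y) n" unfolding dn_hs by (simp add: mult.commute)
      moreover have "c / E \<le> dn (hs x) (hs w) n / E" using c(2)[of n] Epos by (intro divide_right_mono) auto
      ultimately show ?thesis by linarith
    qed
    moreover have "c / E > 0" using c Epos by simp
    ultimately show ?thesis by blast
  qed
  define F where "F x = rep (hs x)" for x
  have FZ: "F x \<in> Z" if "x \<in> X" for x unfolding F_def Z_def using hsS[OF that] by blast
  have DF: "D (F x) (F y) = D (hs x) (hs y)" if "x \<in> X" "y \<in> X" for x y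
    unfolding F_def by (rule D_rep[OF hsS[OF that(1)] hsS[OF that(2)]])
  have Dpos: "0 < D (F x) (F y)" if xy: "x \<in> X" "y \<in> X" "x \<noteq> y" for x y
  proof -
    obtain c where c: "c > 0" "\<And>n. c \<le> dn (hs x) (hs y) n" using lowerB[OF xy] by blast
    have "c \<le> D (hs x) (hs y)" by (rule D_ge[OF hsS[OF xy(1)] hsS[OF xy(2)]]) (use c in auto)
    then show ?thesis using DF[OF xy(1,2)] c by simp
  qed
  have Finj: "inj_on F X"
  proof (rule inj_onI)
    fix x y assume xy: "x \<in> X" "y \<in> X" "F x = F y"
    show "x = y"
    proof (rule ccontr)
      assume "x \<noteq> y"
      then have "0 < D (F x) (F y)" by (rule Dpos[OF xy(1,2)])
      moreover have "D (F x) (F x) = 0" using D_self FZ[OF xy(1)] Z_S by blast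
      ultimately show False using xy(3) by simp
    qed
  qed
  have QSD: "D (F x) (F y) / D (F x) (F z) \<le> e (d x y / d x z)"
    if xyz: "x \<in> X" "y \<in> X" "z \<in> X" "x \<noteq> z" for x y z
  proof -
    have Dz: "D (hs x) (hs z) \<noteq> 0" using Dpos[OF xyz(1,3,4)] DF[OF xyz(1,3)] by simp
    have lim: "((\<lambda>n. dn (hs x) (hs y) n / dn (hs x) (hs z) n) \<longlongrightarrow> D (hs x) (hs y) / D (hs x) (hs z)) U"
      by (intro tendsto_divide D_lim hsS xyz Dz)
    have "dn (hs x) (hs y) n / dn (hs x) (hs z) n \<le> e (d x y / d x z)" for n
    proof -
      have "dn (hs x) (hs y) n / dn (hs x) (hs z) n = d (h n x) (h n y) / d (h n x) (h n z)"
        unfolding dn_hs using lam_pos[of n] by (simp add: divide_divide_eq_left)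
      also have "\<dots> \<le> e (d x y / d x z)" by (rule hqs[OF xyz])
      finally show ?thesis .
    qed
    then have "D (hs x) (hs y) / D (hs x) (hs z) \<le> e (d x y / d x z)"
      using tendsto_upperbound[OF lim _ Unb] by (simp add: always_eventually)
    then show ?thesis using DF xyz by simp
  qed
  have c1: "\<exists>\<delta>>0. \<forall>y\<in>X. d x y < \<delta> \<longrightarrow> D (F x) (F y) < \<epsilon>" if x: "x \<in> X" and e: "\<epsilon> > 0" for x \<epsilon>
  proof -
    obtain w where w: "w \<in> X" "w \<noteq> x" using lowerA[OF x] by blast
    define M where "M = D (F x) (F w)"
    have Mpos: "M > 0" unfolding M_def using Dpos[OF x w(1)] w(2) by simp
    obtain \<delta>0 where d0: "\<delta>0 > 0" "\<forall>s. 0 \<le> s \<longrightarrow> s < \<delta>0 \<longrightarrow> e s < \<epsilon> / M"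
      using esmall[of "\<epsilon>/M"] e Mpos by auto
    have dxw: "d x w > 0" using dpos[OF x w(1)] w(2) by simp
    have "D (F x) (F y) < \<epsilon>" if y: "y \<in> X" "d x y < \<delta>0 * d x w" for y
    proof -
      have "d x y / d x w < \<delta>0" using y(2) dxw by (simp add: divide_less_eq)
      moreover have "0 \<le> d x y / d x w" using dxw by simp
      ultimately have "e (d x y / d x w) < \<epsilon> / M" using d0(2) by blast
      moreover have "D (F x) (F y) / M \<le> e (d x y / d x w)" unfolding M_def using QSD[OF x y(1) w(1)] w(2) by simp
      ultimately have "D (F x) (F y) / M < \<epsilon> / M" by linarith
      then show ?thesis using Mpos by (simp add: divide_less_eq)
    qed
    moreover have "\<delta>0 * d x w > 0" using d0(1) dxw by simp
    ultimately show ?thesis by blast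
  qed
  have c2: "\<exists>\<delta>>0. \<forall>y\<in>X. D (F x) (F y) < \<delta> \<longrightarrow> d x y < \<epsilon>" if x: "x \<in> X" and e: "\<epsilon> > 0" for x \<epsilon>
  proof -
    obtain w where w: "w \<in> X" "w \<noteq> x" using lowerA[OF x] by blast
    define M where "M = D (F x) (F w)"
    have Mpos: "M > 0" unfolding M_def using Dpos[OF x w(1)] w(2) by simp
    have dxw: "d x w > 0" using dpos[OF x w(1)] w(2) by simp
    define E where "E = e (d x w / \<epsilon>)"
    have Epos: "E > 0" unfolding E_def using dxw e by (intro epos) simp
    have "d x y < \<epsilon>" if y: "y \<in> X" "D (F x) (F y) < M / E" for y
    proof (rule ccontr)
      assume "\<not> d x y < \<epsilon>"
      then have dxy: "\<epsilon> \<le> d x y" by simp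
      then have yx: "y \<noteq> x" using e MX.zero[OF x x] by auto
      have Dxy: "D (F x) (F y) > 0" using Dpos[OF x y(1)] yx by simp
      have "M / D (F x) (F y) \<le> e (d x w / d x y)" unfolding M_def using QSD[OF x w(1) y(1)] yx by simp
      also have "\<dots> \<le> E" unfolding E_def
      proof (rule emono)
        show "0 < d x w / d x y" using dxw dxy e by simp
        show "d x w / d x y \<le> d x w / \<epsilon>" using dxw dxy e by (intro divide_left_mono) auto
      qed
      finally have "M / E \<le> D (F x) (F y)" using div_le_aux Mpos Dxy Epos by metis
      then show False using y(2) by simp
    qed
    moreover have "M / E > 0" using Mpos Epos by simp
    ultimately show ?thesis by blast
  qed
  show ?thesis
    by (rule exI[of _ F]) (use FZ Finj c1 c2 QSD in blast)
qed

end

theorem theorem1p2: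
  fixes X :: "'a set" and dX :: "'a \<Rightarrow> 'a \<Rightarrow> real" and p :: 'a
    and \<eta> :: "real \<Rightarrow> real"
  assumes "Metric_space X dX"
    and "proper_mspace X dX"
    and "doubling_mspace X dX"
    and "p \<in> X"
    and "\<exists>g. homeomorphism {0..} {0..} \<eta> g"
    and "\<exists>ps. (\<forall>n. ps n \<in> X) \<and> (\<lambda>n. dX (ps n) p) \<longlonglongrightarrow> 0 \<and>
               (\<forall>n. self_qs_at X dX \<eta> (ps n))"
  shows "\<exists>(T :: real set) t dT f.
           (T, t, dT) \<in> weak_tangents X dX p \<and>
           qs_embedding X dX T dT (\<lambda>s. 1 / inv_into {0..} \<eta> (1 / s)) f"
proof -
  note MX = assms(1) and dbl = assms(3) and pX = assms(4)
  interpret MX: Metric_space X dX by (rule MX)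
  obtain g where H: "homeomorphism {0..} {0..} \<eta> g" using assms(5) by (elim exE)
  interpret E: etaloc \<eta> g by (rule etaloc.intro[OF H])
  have etp_eq: "(\<lambda>s. 1 / inv_into {0..} \<eta> (1 / s)) = E.etp" by (rule ext) (simp add: E.etp_def)
  obtain ps where ps1: "\<forall>n. ps n \<in> X" and ps2: "(\<lambda>n. dX (ps n) p) \<longlonglongrightarrow> 0"
    and ps3: "\<forall>n. self_qs_at X dX \<eta> (ps n)" using assms(6) by (elim exE conjE)
  obtain U0 :: "nat filter" where U0: "U0 \<noteq> bot" "U0 \<le> sequentially"
    "\<forall>P. eventually P U0 \<or> eventually (\<lambda>x. \<not> P x) U0"
    using ultrafilter_exists by (elim exE conjE)
  have U0': "\<And>P. eventually P U0 \<or> eventually (\<lambda>x. \<not> P x) U0" using U0(3) by blast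
  have inv0: "(\<lambda>n. inverse (real (Suc n))) \<longlonglongrightarrow> 0" by (rule LIMSEQ_inverse_real_of_nat)
  show ?thesis
  proof (cases "\<exists>x1\<in>X. x1 \<noteq> p")
    case False
    then have allp: "\<And>x. x \<in> X \<Longrightarrow> x = p" by blast
    define lam :: "nat \<Rightarrow> real" where "lam n = inverse (real (Suc n))" for n
    define q :: "nat \<Rightarrow> 'a" where "q n = p" for n
    interpret L: ulim X dX lam q U0
      by (rule ulim.intro) (use MX U0 U0' pX in \<open>auto simp: lam_def q_def\<close>)
    have lam0: "lam \<longlonglongrightarrow> 0" unfolding lam_def by (rule inv0)
    have qp: "(\<lambda>n. dX (q n) p) \<longlonglongrightarrow> 0" unfolding q_def using MX.zero[OF pX pX] by simp
    have z0S: "L.z0 \<in> L.S" using L.z0Z L.Z_S by blast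
    show ?thesis unfolding etp_eq
    proof (rule L.final_from_ulim[OF dbl lam0 qp, where F="\<lambda>x. L.z0"])
      show "\<And>x. x \<in> X \<Longrightarrow> L.z0 \<in> L.Z" using L.z0Z by blast
      show "inj_on (\<lambda>x. L.z0) X" using allp by (auto simp: inj_on_def)
      show "\<exists>\<delta>>0. \<forall>y\<in>X. dX x y < \<delta> \<longrightarrow> L.D L.z0 L.z0 < \<epsilon>" if "x \<in> X" "\<epsilon> > 0" for x \<epsilon>
        using L.D_self[OF z0S] that by (intro exI[of _ 1]) auto
      show "\<exists>\<delta>>0. \<forall>y\<in>X. L.D L.z0 L.z0 < \<delta> \<longrightarrow> dX x y < \<epsilon>" if "x \<in> X" "\<epsilon> > 0" for x \<epsilon>
      proof (intro exI[of _ 1] conjI ballI impI)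
        fix y assume y: "y \<in> X"
        have "x = p" "y = p" using allp that(1) y by auto
        then show "dX x y < \<epsilon>" using MX.zero[OF pX pX] that(2) by simp
      qed simp
      show "L.D L.z0 L.z0 / L.D L.z0 L.z0 \<le> E.etp (dX x y / dX x z)"
        if "x \<in> X" "y \<in> X" "z \<in> X" "x \<noteq> z" for x y z
        using that allp by blast
    qed
  next
    case True
    then obtain x1 where x1: "x1 \<in> X" "x1 \<noteq> p" by blast
    define x0 where "x0 = p"
    have x0: "x0 \<in> X" "x0 \<noteq> x1" using pX x1 unfolding x0_def by auto
    define Pr where "Pr n r V f \<longleftrightarrow> 0 < r \<and> r \<le> inverse (real (Suc n)) \<and>
       V \<subseteq> Metric_space.mball X dX (ps n) r \<and> qs_homeo V dX X dX \<eta> f \<and> f ` V = X"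
       for n r V and f :: "'a \<Rightarrow> 'a"
    have "\<forall>n. \<exists>r V f. Pr n r V f"
    proof
      fix n
      have "self_qs_at X dX \<eta> (ps n)" using ps3 by blast
      then obtain rx where rx: "rx > 0" and rx2: "\<forall>r. 0 < r \<and> r < rx \<longrightarrow>
        (\<exists>U f. U \<subseteq> Metric_space.mball X dX (ps n) r \<and> qs_homeo U dX X dX \<eta> f \<and> f ` U = X)"
        unfolding self_qs_at_def by (elim exE conjE)
      define r where "r = min (rx/2) (inverse (real (Suc n)))"
      have r: "0 < r" "r < rx" "r \<le> inverse (real (Suc n))" unfolding r_def using rx by auto
      have "\<exists>U f. U \<subseteq> Metric_space.mball X dX (ps n) r \<and> qs_homeo U dX X dX \<eta> f \<and> f ` U = X"
        using rx2 r by blast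
      then obtain V f where "V \<subseteq> Metric_space.mball X dX (ps n) r" "qs_homeo V dX X dX \<eta> f" "f ` V = X"
        by (elim exE conjE)
      then have "Pr n r V f" unfolding Pr_def using r by blast
      then show "\<exists>r V f. Pr n r V f" by blast
    qed
    then obtain R where "\<forall>n. \<exists>V f. Pr n (R n) V f" by (rule choice[THEN exE])
    then obtain VV where "\<forall>n. \<exists>f. Pr n (R n) (VV n) f" by (rule choice[THEN exE])
    then obtain FF where PR: "\<forall>n. Pr n (R n) (VV n) (FF n)" by (rule choice[THEN exE])
    have R1: "\<And>n. 0 < R n" and R2: "\<And>n. R n \<le> inverse (real (Suc n))"
      and V1: "\<And>n. VV n \<subseteq> Metric_space.mball X dX (ps n) (R n)"
      and V2: "\<And>n. qs_homeo (VV n) dX X dX \<eta> (FF n)" and V3: "\<And>n. FF n ` VV n = X"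
      using PR unfolding Pr_def by auto
    have VX: "\<And>n. VV n \<subseteq> X" using V1 MX.mball_subset_mspace by blast
    define h where "h n = inv_into (VV n) (FF n)" for n
    have hp: "\<forall>x\<in>X. h n x \<in> VV n \<and> FF n (h n x) = x" for n
      unfolding h_def by (rule E.qs_inv(1)[OF MX VX V2 V3])
    have hq: "\<forall>x\<in>X. \<forall>y\<in>X. \<forall>z\<in>X. x \<noteq> z \<longrightarrow> dX (h n x) (h n y) / dX (h n x) (h n z) \<le> E.etp (dX x y / dX x z)" for n
      unfolding h_def by (rule E.qs_inv(2)[OF MX VX V2 V3])
    have hX: "\<And>n x. x \<in> X \<Longrightarrow> h n x \<in> X" using hp VX by blast
    have hball: "\<And>n x. x \<in> X \<Longrightarrow> dX (ps n) (h n x) < R n" using hp V1 MX.in_mball by blast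
    have hinj: "\<And>n x y. x \<in> X \<Longrightarrow> y \<in> X \<Longrightarrow> h n x = h n y \<Longrightarrow> x = y" using hp by metis
    define lam where "lam n = dX (h n x0) (h n x1)" for n
    define q where "q n = h n x0" for n
    have lam_pos: "lam n > 0" for n
    proof -
      have "h n x0 \<noteq> h n x1" using hinj x0 x1 by blast
      then show ?thesis unfolding lam_def using MX.zero[OF hX[OF x0(1)] hX[OF x1(1)]] MX.nonneg by (simp add: less_le)
    qed
    interpret L: ulim X dX lam q U0
      by (rule ulim.intro) (use MX U0 U0' lam_pos hX x0 in \<open>auto simp: q_def\<close>)
    have lam0: "lam \<longlonglongrightarrow> 0"
    proof (rule tendsto_sandwich[of "\<lambda>n. 0" _ _ "\<lambda>n. 2 * inverse (real (Suc n))"])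
      show "eventually (\<lambda>n. 0 \<le> lam n) sequentially" using lam_pos by (simp add: less_imp_le)
      show "eventually (\<lambda>n. lam n \<le> 2 * inverse (real (Suc n))) sequentially"
      proof (rule always_eventually, rule allI)
        fix n
        have "lam n \<le> dX (h n x0) (ps n) + dX (ps n) (h n x1)"
          unfolding lam_def using MX.triangle hX x0 x1 ps1 by blast
        also have "\<dots> < R n + R n" using hball[OF x0(1), of n] hball[OF x1(1), of n] MX.commute by simp
        finally show "lam n \<le> 2 * inverse (real (Suc n))" using R2[of n] by simp
      qed
      show "(\<lambda>n. 0::real) \<longlonglongrightarrow> 0" by simp
      show "(\<lambda>n. 2 * inverse (real (Suc n))) \<longlonglongrightarrow> 0" using tendsto_mult_right_zero[OF inv0] by simp
    qed
    have qp: "(\<lambda>n. dX (q n) p) \<longlonglongrightarrow> 0"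
    proof (rule tendsto_sandwich[of "\<lambda>n. 0" _ _ "\<lambda>n. inverse (real (Suc n)) + dX (ps n) p"])
      show "eventually (\<lambda>n. 0 \<le> dX (q n) p) sequentially" by simp
      show "eventually (\<lambda>n. dX (q n) p \<le> inverse (real (Suc n)) + dX (ps n) p) sequentially"
      proof (rule always_eventually, rule allI)
        fix n
        have "dX (q n) p \<le> dX (q n) (ps n) + dX (ps n) p"
          unfolding q_def using MX.triangle hX x0 ps1 pX by blast
        also have "\<dots> \<le> R n + dX (ps n) p" using hball[OF x0(1), of n] MX.commute[of "h n x0" "ps n"] unfolding q_def by simp
        finally show "dX (q n) p \<le> inverse (real (Suc n)) + dX (ps n) p" using R2[of n] by simp
      qed
      show "(\<lambda>n. 0::real) \<longlonglongrightarrow> 0" by simp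
      show "(\<lambda>n. inverse (real (Suc n)) + dX (ps n) p) \<longlonglongrightarrow> 0" using tendsto_add[OF inv0 ps2] by simp
    qed
    have A1: "\<forall>n. \<forall>x\<in>X. h n x \<in> X" using hX by blast
    have A2: "\<forall>n. \<forall>x\<in>X. \<forall>y\<in>X. h n x = h n y \<longrightarrow> x = y" using hinj by blast
    have A3: "\<forall>n. \<forall>x\<in>X. \<forall>y\<in>X. \<forall>z\<in>X. x \<noteq> z \<longrightarrow>
                 dX (h n x) (h n y) / dX (h n x) (h n z) \<le> E.etp (dX x y / dX x z)" using hq by blast
    have A4: "\<forall>n. lam n = dX (h n x0) (h n x1)" unfolding lam_def by simp
    have A5: "\<forall>n. q n = h n x0" unfolding q_def by simp
    have A6: "\<forall>s. 0 < s \<longrightarrow> 0 < E.etp s" using E.etp_pos by blast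
    have A7: "\<forall>s s'. 0 < s \<and> s \<le> s' \<longrightarrow> E.etp s \<le> E.etp s'" using E.etp_mono by blast
    have A8: "\<forall>\<epsilon>. \<epsilon> > 0 \<longrightarrow> (\<exists>\<delta>>0. \<forall>s. 0 \<le> s \<longrightarrow> s < \<delta> \<longrightarrow> E.etp s < \<epsilon>)" using E.etp_small by blast
    obtain F where FZ: "\<forall>x\<in>X. F x \<in> L.Z" and Finj: "inj_on F X"
      and c1: "\<forall>x\<in>X. \<forall>\<epsilon>>0. \<exists>\<delta>>0. \<forall>y\<in>X. dX x y < \<delta> \<longrightarrow> L.D (F x) (F y) < \<epsilon>"
      and c2: "\<forall>x\<in>X. \<forall>\<epsilon>>0. \<exists>\<delta>>0. \<forall>y\<in>X. L.D (F x) (F y) < \<delta> \<longrightarrow> dX x y < \<epsilon>"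
      and qs: "\<forall>x\<in>X. \<forall>y\<in>X. \<forall>z\<in>X. x \<noteq> z \<longrightarrow> L.D (F x) (F y) / L.D (F x) (F z) \<le> E.etp (dX x y / dX x z)"
      using L.embed_from_h[OF x0(1) x1(1) x0(2) A1 A2 A3 A4 A5 A6 A7 A8] by (elim exE conjE)
    show ?thesis unfolding etp_eq
      by (rule L.final_from_ulim[OF dbl lam0 qp, where F=F]) (use FZ Finj c1 c2 qs in blast)+
  qed
qed

end
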